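(* Let $k\ge1$ be an integer, let $G$ be a graph and let $A,B\subseteq V(G)$ satisfy $\mathrm{dist}(A,B)>2^k$ and \[\mathrm{tp}_k\big(G\langle X\mapsto A\rangle[N_{2^{k-1}-1}[A]]\big)=\mathrm{tp}_k\big(G\langle X\mapsto B\rangle[N_{2^{k-1}-1}[B]]\big).\] Let $\bar w\in V(G)^{|\bar y|}$ be a tuple of vertices with $\mathrm{dist}(\bar w,A\cup B)\ge 2^k$. Then for every first-order formula $\varphi(\bar y,x)$ of quantifier rank at most $k-1$ in the signature of $G$, \[G\langle A\rangle\models\exists x\in A\ \varphi(\bar w,x)\iff G\langle B\rangle\models\exists x\in B\ \varphi(\bar w,x).\]
   Context: Graphs are finite, loopless, undirected, with finitely many unary color predicates. $\mathrm{dist}(\bar a,\bar b)$ is the minimum distance between an element of $\bar a$ and one of $\bar b$ (sets or tuples); $N_r[S]$ is the set of vertices at distance at most $r$ from $S$. $G\langle X\mapsto W\rangle$ is $G$ expanded by a new unary predicate $X$ interpreted as $W$; $G\langle W\rangle$ denotes the expansion by a new unary predicate (also named $W$) interpreted as $W$, and $\exists x\in W\,\psi$ abbreviates $\exists x\,(W(x)\wedge\psi)$. $H[S]$ is the induced substructure (colors restricted). $\mathrm{tp}_k(H)$ is the set of first-order sentences of quantifier rank at most $k$ (over the signature of $H$) true in $H$; equality of types means the two structures satisfy the same such sentences. *)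

theory Defs
  imports Main "HOL-Library.Extended_Nat"
begin

record ('a, 'c) cgraph =
  verts :: "'a set"
  adj   :: "'a \<Rightarrow> 'a \<Rightarrow> bool"
  colr  :: "'c \<Rightarrow> 'a set"

definition wf_cgraph :: "('a, 'c) cgraph \<Rightarrow> bool" where
  "wf_cgraph G \<longleftrightarrow> finite (verts G)
     \<and> (\<forall>u v. adj G u v \<longrightarrow> u \<in> verts G \<and> v \<in> verts G)
     \<and> (\<forall>u v. adj G u v \<longrightarrow> adj G v u)
     \<and> (\<forall>u. \<not> adj G u u)
     \<and> (\<forall>c. colr G c \<subseteq> verts G)"

datatype 'c fm =
    Eq nat nat
  | Adj nat nat
  | Col 'c nat
  | Neg "'c fm"
  | Conj "'c fm" "'c fm"
  | Ex nat "'c fm"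

fun qr :: "'c fm \<Rightarrow> nat" where
  "qr (Eq x y) = 0"
| "qr (Adj x y) = 0"
| "qr (Col c x) = 0"
| "qr (Neg \<phi>) = qr \<phi>"
| "qr (Conj \<phi> \<psi>) = max (qr \<phi>) (qr \<psi>)"
| "qr (Ex x \<phi>) = Suc (qr \<phi>)"

fun fv :: "'c fm \<Rightarrow> nat set" where
  "fv (Eq x y) = {x, y}"
| "fv (Adj x y) = {x, y}"
| "fv (Col c x) = {x}"
| "fv (Neg \<phi>) = fv \<phi>"
| "fv (Conj \<phi> \<psi>) = fv \<phi> \<union> fv \<psi>"
| "fv (Ex x \<phi>) = fv \<phi> - {x}"

fun sat :: "('a, 'c) cgraph \<Rightarrow> (nat \<Rightarrow> 'a) \<Rightarrow> 'c fm \<Rightarrow> bool" where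
  "sat H \<nu> (Eq x y) \<longleftrightarrow> \<nu> x = \<nu> y"
| "sat H \<nu> (Adj x y) \<longleftrightarrow> adj H (\<nu> x) (\<nu> y)"
| "sat H \<nu> (Col c x) \<longleftrightarrow> \<nu> x \<in> colr H c"
| "sat H \<nu> (Neg \<phi>) \<longleftrightarrow> \<not> sat H \<nu> \<phi>"
| "sat H \<nu> (Conj \<phi> \<psi>) \<longleftrightarrow> sat H \<nu> \<phi> \<and> sat H \<nu> \<psi>"
| "sat H \<nu> (Ex x \<phi>) \<longleftrightarrow> (\<exists>a\<in>verts H. sat H (\<nu>(x := a)) \<phi>)"

definition models :: "('a, 'c) cgraph \<Rightarrow> 'c fm \<Rightarrow> bool" where
  "models H \<phi> \<longleftrightarrow> (\<forall>\<nu>. sat H \<nu> \<phi>)"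

definition tp :: "nat \<Rightarrow> ('a, 'c) cgraph \<Rightarrow> 'c fm set" where
  "tp k H = {\<phi>. fv \<phi> = {} \<and> qr \<phi> \<le> k \<and> models H \<phi>}"

text \<open>Expansion by a new unary predicate (the colour None) interpreted as W.\<close>
definition expand :: "('a, 'c) cgraph \<Rightarrow> 'a set \<Rightarrow> ('a, 'c option) cgraph" where
  "expand G W = \<lparr>verts = verts G, adj = adj G,
      colr = (\<lambda>c0. case c0 of None \<Rightarrow> W | Some c \<Rightarrow> colr G c)\<rparr>"

definition induced :: "('a, 'c) cgraph \<Rightarrow> 'a set \<Rightarrow> ('a, 'c) cgraph" where
  "induced H S = \<lparr>verts = verts H \<inter> S, adj = (\<lambda>u v. adj H u v \<and> u \<in> S \<and> v \<in> S),
      colr = (\<lambda>c. colr H c \<inter> S)\<rparr>"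

definition walk :: "('a, 'c) cgraph \<Rightarrow> 'a list \<Rightarrow> bool" where
  "walk G p \<longleftrightarrow> p \<noteq> [] \<and> set p \<subseteq> verts G \<and> (\<forall>i. Suc i < length p \<longrightarrow> adj G (p ! i) (p ! Suc i))"

definition gdist :: "('a, 'c) cgraph \<Rightarrow> 'a \<Rightarrow> 'a \<Rightarrow> enat" where
  "gdist G u v = (INF p \<in> {p. walk G p \<and> hd p = u \<and> last p = v}. enat (length p - 1))"

text \<open>Minimum distance between an element of S and one of T (\<infinity> if none).\<close>
definition setdist :: "('a, 'c) cgraph \<Rightarrow> 'a set \<Rightarrow> 'a set \<Rightarrow> enat" where
  "setdist G S T = (INF u \<in> S. INF v \<in> T. gdist G u v)"

definition nbhd :: "('a, 'c) cgraph \<Rightarrow> nat \<Rightarrow> 'a set \<Rightarrow> 'a set" where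
  "nbhd G r S = {v \<in> verts G. \<exists>u \<in> S. gdist G u v \<le> enat r}"

definition ex_in_new :: "nat \<Rightarrow> 'c fm \<Rightarrow> 'c option fm" where
  "ex_in_new x \<phi> = Ex x (Conj (Col None x) (map_fm Some \<phi>))"

end

theory Submission
  imports Defs
begin

fun reach :: "('a, 'c) cgraph \<Rightarrow> nat \<Rightarrow> 'a \<Rightarrow> 'a \<Rightarrow> bool" where
  "reach H 0 u v = (u = v \<and> u \<in> verts H)"
| "reach H (Suc t) u v = (reach H t u v \<or> (\<exists>z. reach H t u z \<and> adj H z v \<and> v \<in> verts H))"

lemma reach_verts: "reach H t u v \<Longrightarrow> u \<in> verts H \<and> v \<in> verts H"
proof (induction t arbitrary: v)
  case 0 then show ?case by auto
next
  case (Suc t) then show ?case by force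
qed

lemma reach_mono: "reach H t u v \<Longrightarrow> t \<le> t' \<Longrightarrow> reach H t' u v"
proof (induction t' arbitrary: t)
  case 0 then show ?case by auto
next
  case (Suc t')
  then show ?case by (cases "t = Suc t'") auto
qed

lemma reach_refl: "u \<in> verts H \<Longrightarrow> reach H t u u"
  using reach_mono[of H 0 u u t] by simp

lemma reach_adj: "adj H u v \<Longrightarrow> u \<in> verts H \<Longrightarrow> v \<in> verts H \<Longrightarrow> reach H 1 u v"
  by auto

lemma reach_trans: "reach H s u v \<Longrightarrow> reach H t v x \<Longrightarrow> reach H (s + t) u x"
proof (induction t arbitrary: x)
  case 0 then show ?case by simp
next
  case (Suc t)
  then show ?case by auto
qed

lemma reach_mid: "reach H (s + t) u v \<Longrightarrow> \<exists>z. reach H s u z \<and> reach H t z v"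
proof (induction t arbitrary: v)
  case 0 then have r: "reach H s u v" by simp
  have "v \<in> verts H" using reach_verts[OF r] by blast
  then have "reach H 0 v v" by simp
  with r show ?case by blast
next
  case (Suc t)
  from Suc.prems have "reach H (s + t) u v \<or> (\<exists>z. reach H (s+t) u z \<and> adj H z v \<and> v \<in> verts H)" by simp
  then show ?case
  proof
    assume "reach H (s + t) u v"
    then obtain z where "reach H s u z" "reach H t z v" using Suc.IH by blast
    then show ?thesis using reach_mono[of H t z v "Suc t"] by auto
  next
    assume "\<exists>z. reach H (s+t) u z \<and> adj H z v \<and> v \<in> verts H"
    then obtain z' where z': "reach H (s+t) u z'" "adj H z' v" "v \<in> verts H" by blast
    then obtain z where "reach H s u z" "reach H t z z'" using Suc.IH by blast
    then show ?thesis using z' by auto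
  qed
qed

lemma reach_sym:
  assumes "\<forall>u v. adj H u v \<longrightarrow> adj H v u"
  shows "reach H t u v \<Longrightarrow> reach H t v u"
proof (induction t arbitrary: v)
  case 0 then show ?case by auto
next
  case (Suc t)
  then show ?case
  proof (cases "reach H t u v")
    case True then show ?thesis using Suc reach_mono[of H t v u "Suc t"] by auto
  next
    case False
    then obtain z where z: "reach H t u z" "adj H z v" "v \<in> verts H" using Suc.prems by auto
    have "reach H 1 v z" using z assms reach_verts[OF z(1)] by auto
    moreover have "reach H t z u" using Suc.IH z(1) by blast
    ultimately show ?thesis using reach_trans[of H 1 v z t u] by simp
  qed
qed

lemma walk_reach: "walk H p \<Longrightarrow> reach H (length p - 1) (hd p) (last p)"
proof (induction p rule: rev_induct)
  case Nil then show ?case by (simp add: walk_def)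
next
  case (snoc v q)
  show ?case
  proof (cases "q = []")
    case True then show ?thesis using snoc.prems by (simp add: walk_def)
  next
    case False
    have wq: "walk H q" unfolding walk_def
    proof (intro conjI allI impI)
      show "q \<noteq> []" by fact
      show "set q \<subseteq> verts H" using snoc.prems unfolding walk_def by auto
      fix i assume i: "Suc i < length q"
      then have "adj H ((q @ [v]) ! i) ((q @ [v]) ! Suc i)" using snoc.prems unfolding walk_def by auto
      then show "adj H (q ! i) (q ! Suc i)" using i by (simp add: nth_append)
    qed
    have al: "\<forall>i. Suc i < length (q @ [v]) \<longrightarrow> adj H ((q @ [v]) ! i) ((q @ [v]) ! Suc i)"
      using snoc.prems unfolding walk_def by blast
    have "Suc (length q - 1) < length (q @ [v])" using False by simp
    then have "adj H ((q @ [v]) ! (length q - 1)) ((q @ [v]) ! Suc (length q - 1))"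
      using al by blast
    then have "adj H (last q) v" using False
      by (simp add: nth_append last_conv_nth)
    moreover have "v \<in> verts H" using snoc.prems unfolding walk_def by auto
    ultimately have "reach H (Suc (length q - 1)) (hd q) v" using snoc.IH[OF wq] by auto
    then show ?thesis using False by simp
  qed
qed

lemma reach_walk: "reach H t u v \<Longrightarrow> \<exists>p. walk H p \<and> hd p = u \<and> last p = v \<and> length p \<le> Suc t"
proof (induction t arbitrary: v)
  case 0
  then show ?case by (intro exI[of _ "[u]"]) (auto simp: walk_def)
next
  case (Suc t)
  show ?case
  proof (cases "reach H t u v")
    case True
    then obtain p where "walk H p" "hd p = u" "last p = v" "length p \<le> Suc t" using Suc.IH by blast
    then show ?thesis by (intro exI[of _ p]) simp
  next
    case False
    then obtain z where z: "reach H t u z" "adj H z v" "v \<in> verts H" using Suc.prems by auto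
    then obtain p where p: "walk H p" "hd p = u" "last p = z" "length p \<le> Suc t" using Suc.IH by blast
    have "walk H (p @ [v])"
      unfolding walk_def
    proof (intro conjI allI impI)
      show "p @ [v] \<noteq> []" by simp
      show "set (p @ [v]) \<subseteq> verts H" using p z unfolding walk_def by auto
      fix i assume i: "Suc i < length (p @ [v])"
      show "adj H ((p @ [v]) ! i) ((p @ [v]) ! Suc i)"
      proof (cases "Suc i < length p")
        case True then show ?thesis using p(1) unfolding walk_def by (simp add: nth_append)
      next
        case False
        then have ii: "i = length p - 1" using i by simp
        have pne: "p \<noteq> []" using p(1) walk_def by auto
        then have "(p @ [v]) ! i = last p" using ii by (simp add: nth_append last_conv_nth)
        moreover have "(p @ [v]) ! Suc i = v" using ii pne by (simp add: nth_append)
        ultimately show ?thesis using z p(3) by simp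
      qed
    qed
    moreover have "hd (p @ [v]) = u" using p walk_def by (auto simp: hd_append)
    moreover have "last (p @ [v]) = v" "length (p @ [v]) \<le> Suc (Suc t)" using p(4) by simp_all
    ultimately show ?thesis using p(2) by (intro exI[of _ "p @ [v]"]) simp
  qed
qed

lemma gdist_le1: "gdist H u v \<le> enat t \<Longrightarrow> \<forall>y > enat t. \<exists>p\<in>{p. walk H p \<and> hd p = u \<and> last p = v}. y > enat (length p - 1)"
    unfolding gdist_def INF_le_iff .
lemma gdist_le2: "\<forall>y > enat t. \<exists>p\<in>{p. walk H p \<and> hd p = u \<and> last p = v}. y > enat (length p - 1) \<Longrightarrow> \<exists>p. walk H p \<and> hd p = u \<and> last p = v \<and> length p - 1 \<le> t"
proof -
  assume h: "\<forall>y > enat t. \<exists>p\<in>{p. walk H p \<and> hd p = u \<and> last p = v}. y > enat (length p - 1)"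
  have lt: "enat t < enat (Suc t)" by simp
  have "\<exists>p\<in>{p. walk H p \<and> hd p = u \<and> last p = v}. enat (Suc t) > enat (length p - 1)"
    using h lt by blast
  then show ?thesis by auto
qed

lemma gdist_le: "gdist H u v \<le> enat t \<longleftrightarrow> reach H t u v"
proof
  assume "gdist H u v \<le> enat t"
  from gdist_le2[OF gdist_le1[OF this]] obtain p where p: "walk H p" "hd p = u" "last p = v" "length p - 1 \<le> t"
    by blast
  have "reach H (length p - 1) (hd p) (last p)" using walk_reach[OF p(1)] .
  then have "reach H (length p - 1) u v" using p(2,3) by blast
  then show "reach H t u v" by (rule reach_mono[OF _ p(4)])
next
  assume "reach H t u v"
  from reach_walk[OF this] obtain p where p: "walk H p" "hd p = u" "last p = v" "length p \<le> Suc t" by blast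
  have "gdist H u v \<le> enat (length p - 1)" unfolding gdist_def by (rule INF_lower) (simp add: p(1,2,3))
  also have "\<dots> \<le> enat t" using p(4) by simp
  finally show "gdist H u v \<le> enat t" .
qed

definition patom :: "('a,'d) cgraph \<Rightarrow> (nat \<Rightarrow> 'a) \<Rightarrow> ('b,'d) cgraph \<Rightarrow> (nat \<Rightarrow> 'b) \<Rightarrow> nat set \<Rightarrow> bool" where
 "patom H1 m1 H2 m2 S \<longleftrightarrow> (\<forall>i\<in>S. \<forall>j\<in>S. (m1 i = m1 j \<longleftrightarrow> m2 i = m2 j) \<and> (adj H1 (m1 i) (m1 j) \<longleftrightarrow> adj H2 (m2 i) (m2 j)))
     \<and> (\<forall>i\<in>S. \<forall>c. m1 i \<in> colr H1 c \<longleftrightarrow> m2 i \<in> colr H2 c)"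

fun efg :: "nat \<Rightarrow> ('a,'d) cgraph \<Rightarrow> (nat \<Rightarrow> 'a) \<Rightarrow> ('b,'d) cgraph \<Rightarrow> (nat \<Rightarrow> 'b) \<Rightarrow> nat set \<Rightarrow> bool" where
 "efg 0 H1 m1 H2 m2 S = patom H1 m1 H2 m2 S"
| "efg (Suc m) H1 m1 H2 m2 S = (patom H1 m1 H2 m2 S \<and> (\<forall>x.
     (\<forall>a\<in>verts H1. \<exists>b\<in>verts H2. efg m H1 (m1(x:=a)) H2 (m2(x:=b)) (insert x S)) \<and>
     (\<forall>b\<in>verts H2. \<exists>a\<in>verts H1. efg m H1 (m1(x:=a)) H2 (m2(x:=b)) (insert x S))))"

lemma efg_patom: "efg m H1 m1 H2 m2 S \<Longrightarrow> patom H1 m1 H2 m2 S"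
  by (cases m) auto

lemma efg_forth: "efg (Suc m) H1 m1 H2 m2 S \<Longrightarrow> a \<in> verts H1 \<Longrightarrow>
    \<exists>b\<in>verts H2. efg m H1 (m1(x:=a)) H2 (m2(x:=b)) (insert x S)"
  unfolding efg.simps by blast

lemma efg_back: "efg (Suc m) H1 m1 H2 m2 S \<Longrightarrow> b \<in> verts H2 \<Longrightarrow>
    \<exists>a\<in>verts H1. efg m H1 (m1(x:=a)) H2 (m2(x:=b)) (insert x S)"
  unfolding efg.simps by blast

lemma efg_SucI: "patom H1 m1 H2 m2 S \<Longrightarrow>
   (\<And>x a. a \<in> verts H1 \<Longrightarrow> \<exists>b\<in>verts H2. efg m H1 (m1(x:=a)) H2 (m2(x:=b)) (insert x S)) \<Longrightarrow>
   (\<And>x b. b \<in> verts H2 \<Longrightarrow> \<exists>a\<in>verts H1. efg m H1 (m1(x:=a)) H2 (m2(x:=b)) (insert x S)) \<Longrightarrow>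
   efg (Suc m) H1 m1 H2 m2 S"
  by simp

lemma patom_cong:
  assumes "patom H1 m1 H2 m2 S" "\<forall>i\<in>S'. m1' i = m1 i \<and> m2' i = m2 i" "S' \<subseteq> S"
  shows "patom H1 m1' H2 m2' S'"
  unfolding patom_def
proof (intro conjI ballI allI)
  fix i j assume ij: "i \<in> S'" "j \<in> S'"
  then have e: "m1' i = m1 i" "m2' i = m2 i" "m1' j = m1 j" "m2' j = m2 j" using assms(2) by auto
  have ij2: "i \<in> S" "j \<in> S" using ij assms(3) by auto
  have "(m1 i = m1 j \<longleftrightarrow> m2 i = m2 j)" "(adj H1 (m1 i) (m1 j) \<longleftrightarrow> adj H2 (m2 i) (m2 j))"
    using assms(1) ij2 unfolding patom_def by auto
  then show "(m1' i = m1' j \<longleftrightarrow> m2' i = m2' j)" "(adj H1 (m1' i) (m1' j) \<longleftrightarrow> adj H2 (m2' i) (m2' j))"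
    using e by simp_all
next
  fix i c assume i: "i \<in> S'"
  then have e: "m1' i = m1 i" "m2' i = m2 i" using assms(2) by auto
  have "i \<in> S" using i assms(3) by auto
  then have "m1 i \<in> colr H1 c \<longleftrightarrow> m2 i \<in> colr H2 c" using assms(1) unfolding patom_def by auto
  then show "m1' i \<in> colr H1 c \<longleftrightarrow> m2' i \<in> colr H2 c" using e by simp
qed

lemma patom_sym: "patom H1 m1 H2 m2 S \<Longrightarrow> patom H2 m2 H1 m1 S"
  unfolding patom_def by auto

lemma efg_sat: "efg m H1 m1 H2 m2 S \<Longrightarrow> fv \<phi> \<subseteq> S \<Longrightarrow> qr \<phi> \<le> m \<Longrightarrow> sat H1 m1 \<phi> = sat H2 m2 \<phi>"
proof (induction \<phi> arbitrary: m m1 m2 S)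
  case (Eq x y) then show ?case using efg_patom[OF Eq(1)] by (auto simp: patom_def)
next
  case (Adj x y) then show ?case using efg_patom[OF Adj(1)] by (auto simp: patom_def)
next
  case (Col c x) then show ?case using efg_patom[OF Col(1)] by (auto simp: patom_def)
next
  case (Neg \<phi>) then show ?case by simp
next
  case (Conj \<phi>1 \<phi>2) then show ?case by simp
next
  case (Ex x \<psi>)
  then obtain m' where m: "m = Suc m'" by (cases m) auto
  have fvs: "fv \<psi> \<subseteq> insert x S" using Ex.prems(2) by auto
  have q: "qr \<psi> \<le> m'" using Ex.prems(3) m by simp
  have e: "efg (Suc m') H1 m1 H2 m2 S" using Ex.prems(1) m by simp
  show ?case
  proof
    assume "sat H1 m1 (Ex x \<psi>)"
    then obtain a where a: "a \<in> verts H1" "sat H1 (m1(x:=a)) \<psi>" by auto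
    then obtain b where b: "b \<in> verts H2" "efg m' H1 (m1(x:=a)) H2 (m2(x:=b)) (insert x S)"
      using efg_forth[OF e] by blast
    have eq: "sat H1 (m1(x:=a)) \<psi> = sat H2 (m2(x:=b)) \<psi>" by (rule Ex.IH[OF b(2) fvs q])
    then have "sat H2 (m2(x:=b)) \<psi>" using a(2) by simp
    then show "sat H2 m2 (Ex x \<psi>)" using b(1) by auto
  next
    assume "sat H2 m2 (Ex x \<psi>)"
    then obtain b where b: "b \<in> verts H2" "sat H2 (m2(x:=b)) \<psi>" by auto
    then obtain a where a: "a \<in> verts H1" "efg m' H1 (m1(x:=a)) H2 (m2(x:=b)) (insert x S)"
      using efg_back[OF e] by blast
    have eq: "sat H1 (m1(x:=a)) \<psi> = sat H2 (m2(x:=b)) \<psi>" by (rule Ex.IH[OF a(2) fvs q])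
    then have "sat H1 (m1(x:=a)) \<psi>" using b(2) by simp
    then show "sat H1 m1 (Ex x \<psi>)" using a(1) by auto
  qed
qed

lemma efg_sym: "efg m H1 m1 H2 m2 S \<Longrightarrow> efg m H2 m2 H1 m1 S"
proof (induction m arbitrary: m1 m2 S)
  case 0 then show ?case using patom_sym by simp
next
  case (Suc m)
  show ?case
  proof (rule efg_SucI)
    show "patom H2 m2 H1 m1 S" using patom_sym[OF efg_patom[OF Suc.prems]] .
  next
    fix x a assume "a \<in> verts H2"
    from efg_back[OF Suc.prems this] obtain b where "b \<in> verts H1" "efg m H1 (m1(x:=b)) H2 (m2(x:=a)) (insert x S)"
      by blast
    then show "\<exists>b\<in>verts H1. efg m H2 (m2(x:=a)) H1 (m1(x:=b)) (insert x S)" using Suc.IH[of "m1(x:=b)" "m2(x:=a)" "insert x S"] by blast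
  next
    fix x b assume "b \<in> verts H1"
    from efg_forth[OF Suc.prems this] obtain a where "a \<in> verts H2" "efg m H1 (m1(x:=b)) H2 (m2(x:=a)) (insert x S)"
      by blast
    then show "\<exists>a\<in>verts H2. efg m H2 (m2(x:=a)) H1 (m1(x:=b)) (insert x S)" using Suc.IH[of "m1(x:=b)" "m2(x:=a)" "insert x S"] by blast
  qed
qed

lemma efg_cong: "efg m H1 m1 H2 m2 S \<Longrightarrow> \<forall>i\<in>S'. m1' i = m1 i \<and> m2' i = m2 i \<Longrightarrow> S' \<subseteq> S \<Longrightarrow>
   efg m H1 m1' H2 m2' S'"
proof (induction m arbitrary: m1 m2 m1' m2' S S')
  case 0 then show ?case using patom_cong by simp
next
  case (Suc m)
  have ag: "\<And>x a b. \<forall>i\<in>insert x S'. (m1'(x:=a)) i = (m1(x:=a)) i \<and> (m2'(x:=b)) i = (m2(x:=b)) i"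
    using Suc.prems(2) by auto
  have sub: "\<And>x. insert x S' \<subseteq> insert x S" using Suc.prems(3) by auto
  show ?case
  proof (rule efg_SucI)
    show "patom H1 m1' H2 m2' S'" using patom_cong[OF efg_patom[OF Suc.prems(1)] Suc.prems(2,3)] .
  next
    fix x a assume "a \<in> verts H1"
    from efg_forth[OF Suc.prems(1) this] obtain b where "b \<in> verts H2" "efg m H1 (m1(x:=a)) H2 (m2(x:=b)) (insert x S)"
      by blast
    then show "\<exists>b\<in>verts H2. efg m H1 (m1'(x := a)) H2 (m2'(x := b)) (insert x S')"
      using Suc.IH[OF _ ag sub] by blast
  next
    fix x b assume "b \<in> verts H2"
    from efg_back[OF Suc.prems(1) this] obtain a where "a \<in> verts H1" "efg m H1 (m1(x:=a)) H2 (m2(x:=b)) (insert x S)"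
      by blast
    then show "\<exists>a\<in>verts H1. efg m H1 (m1'(x := a)) H2 (m2'(x := b)) (insert x S')"
      using Suc.IH[OF _ ag sub] by blast
  qed
qed

lemma efg_Suc_mono: "efg (Suc m) H1 m1 H2 m2 S \<Longrightarrow> efg m H1 m1 H2 m2 S"
proof (induction m arbitrary: m1 m2 S)
  case 0 then show ?case by simp
next
  case (Suc m)
  show ?case
  proof (rule efg_SucI)
    show "patom H1 m1 H2 m2 S" using efg_patom[OF Suc.prems] .
  next
    fix x a assume "a \<in> verts H1"
    from efg_forth[OF Suc.prems this] obtain b where "b \<in> verts H2" "efg (Suc m) H1 (m1(x:=a)) H2 (m2(x:=b)) (insert x S)"
      by blast
    then show "\<exists>b\<in>verts H2. efg m H1 (m1(x := a)) H2 (m2(x := b)) (insert x S)"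
      using Suc.IH[of "m1(x:=a)" "m2(x:=b)" "insert x S"] by blast
  next
    fix x b assume "b \<in> verts H2"
    from efg_back[OF Suc.prems this] obtain a where "a \<in> verts H1" "efg (Suc m) H1 (m1(x:=a)) H2 (m2(x:=b)) (insert x S)"
      by blast
    then show "\<exists>a\<in>verts H1. efg m H1 (m1(x := a)) H2 (m2(x := b)) (insert x S)"
      using Suc.IH[of "m1(x:=a)" "m2(x:=b)" "insert x S"] by blast
  qed
qed

lemma sat_cong: "\<forall>i\<in>fv \<phi>. \<nu> i = \<nu>' i \<Longrightarrow> sat H \<nu> \<phi> = sat H \<nu>' \<phi>"
proof (induction \<phi> arbitrary: \<nu> \<nu>')
  case (Neg \<psi>)
  have "sat H \<nu> \<psi> = sat H \<nu>' \<psi>" using Neg.IH Neg.prems by simp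
  then show ?case by simp
next
  case (Conj \<psi>1 \<psi>2)
  have "sat H \<nu> \<psi>1 = sat H \<nu>' \<psi>1" using Conj.IH(1) Conj.prems by simp
  moreover have "sat H \<nu> \<psi>2 = sat H \<nu>' \<psi>2" using Conj.IH(2) Conj.prems by simp
  ultimately show ?case by simp
next
  case (Ex x \<psi>)
  have "\<And>a. sat H (\<nu>(x:=a)) \<psi> = sat H (\<nu>'(x:=a)) \<psi>"
  proof -
    fix a
    have "\<forall>i\<in>fv \<psi>. (\<nu>(x:=a)) i = (\<nu>'(x:=a)) i" using Ex.prems by auto
    then show "sat H (\<nu>(x:=a)) \<psi> = sat H (\<nu>'(x:=a)) \<psi>" using Ex.IH by blast
  qed
  then show ?case by simp
qed auto

fun bigconj :: "nat \<Rightarrow> 'c fm list \<Rightarrow> 'c fm" where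
  "bigconj x [] = Eq x x"
| "bigconj x (\<psi> # l) = Conj \<psi> (bigconj x l)"

lemma sat_bigconj: "sat H \<nu> (bigconj x l) = (\<forall>\<psi>\<in>set l. sat H \<nu> \<psi>)"
  by (induction l) auto

lemma fv_bigconj: "fv (bigconj x l) \<subseteq> insert x (\<Union>\<psi>\<in>set l. fv \<psi>)"
  by (induction l) auto

lemma qr_bigconj: "\<forall>\<psi>\<in>set l. qr \<psi> \<le> m \<Longrightarrow> qr (bigconj x l) \<le> m"
  by (induction l) auto

lemma patom_fail: "\<not> patom H1 m1 H2 m2 S \<Longrightarrow> \<exists>\<phi>. fv \<phi> \<subseteq> S \<and> qr \<phi> = 0 \<and> \<not> (sat H1 m1 \<phi> = sat H2 m2 \<phi>)"
proof -
  assume "\<not> patom H1 m1 H2 m2 S"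
  then consider (e) i j where "i \<in> S" "j \<in> S" "\<not> (m1 i = m1 j \<longleftrightarrow> m2 i = m2 j)"
    | (a) i j where "i \<in> S" "j \<in> S" "\<not> (adj H1 (m1 i) (m1 j) \<longleftrightarrow> adj H2 (m2 i) (m2 j))"
    | (c) i c where "i \<in> S" "\<not> (m1 i \<in> colr H1 c \<longleftrightarrow> m2 i \<in> colr H2 c)"
    unfolding patom_def by blast
  then show ?thesis
  proof cases
    case e then show ?thesis by (intro exI[of _ "Eq i j"]) simp
  next
    case a then show ?thesis by (intro exI[of _ "Adj i j"]) simp
  next
    case c then show ?thesis by (intro exI[of _ "Col c i"]) simp
  qed
qed

lemma distinguish:
  assumes "finite (verts H1)" "finite (verts H2)"
  shows "\<not> efg m H1 m1 H2 m2 S \<Longrightarrow> \<exists>\<phi>. fv \<phi> \<subseteq> S \<and> qr \<phi> \<le> m \<and> \<not> (sat H1 m1 \<phi> = sat H2 m2 \<phi>)"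
proof (induction m arbitrary: m1 m2 S)
  case 0 then show ?case using patom_fail by fastforce
next
  case (Suc m)
  show ?case
  proof (cases "patom H1 m1 H2 m2 S")
    case False then show ?thesis using patom_fail by fastforce
  next
    case True
    then obtain x where
      "\<not> ((\<forall>a\<in>verts H1. \<exists>b\<in>verts H2. efg m H1 (m1(x:=a)) H2 (m2(x:=b)) (insert x S)) \<and>
          (\<forall>b\<in>verts H2. \<exists>a\<in>verts H1. efg m H1 (m1(x:=a)) H2 (m2(x:=b)) (insert x S)))"
      using Suc.prems by auto
    then consider (f) a where "a \<in> verts H1" "\<forall>b\<in>verts H2. \<not> efg m H1 (m1(x:=a)) H2 (m2(x:=b)) (insert x S)"
      | (b) b where "b \<in> verts H2" "\<forall>a\<in>verts H1. \<not> efg m H1 (m1(x:=a)) H2 (m2(x:=b)) (insert x S)"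
      by blast
    then show ?thesis
    proof cases
      case f
      have "\<forall>b\<in>verts H2. \<exists>\<phi>. fv \<phi> \<subseteq> insert x S \<and> qr \<phi> \<le> m \<and> \<not> (sat H1 (m1(x:=a)) \<phi> = sat H2 (m2(x:=b)) \<phi>)"
      proof
        fix b assume "b \<in> verts H2"
        then have "\<not> efg m H1 (m1(x:=a)) H2 (m2(x:=b)) (insert x S)" using f(2) by blast
        then show "\<exists>\<phi>. fv \<phi> \<subseteq> insert x S \<and> qr \<phi> \<le> m \<and> \<not> (sat H1 (m1(x:=a)) \<phi> = sat H2 (m2(x:=b)) \<phi>)"
          by (rule Suc.IH)
      qed
      from bchoice[OF this] obtain g where g: "\<forall>b\<in>verts H2. fv (g b) \<subseteq> insert x S \<and> qr (g b) \<le> m \<and> \<not> (sat H1 (m1(x:=a)) (g b) = sat H2 (m2(x:=b)) (g b))"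
        by blast
      define h where "h b = (if sat H1 (m1(x:=a)) (g b) then g b else Neg (g b))" for b
      have h: "\<forall>b\<in>verts H2. fv (h b) \<subseteq> insert x S \<and> qr (h b) \<le> m \<and> sat H1 (m1(x:=a)) (h b) \<and> \<not> sat H2 (m2(x:=b)) (h b)"
        using g unfolding h_def by auto
      obtain bs where bs: "set bs = verts H2" using finite_list[OF assms(2)] by blast
      define \<Phi> where "\<Phi> = Ex x (bigconj x (map h bs))"
      have "fv \<Phi> \<subseteq> S" unfolding \<Phi>_def using fv_bigconj[of x "map h bs"] h bs by auto
      moreover have "qr \<Phi> \<le> Suc m" unfolding \<Phi>_def using qr_bigconj[of "map h bs" m x] h bs by auto
      moreover have "sat H1 m1 \<Phi>" unfolding \<Phi>_def using f(1) h bs by (auto simp: sat_bigconj)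
      moreover have "\<not> sat H2 m2 \<Phi>" unfolding \<Phi>_def using h bs by (auto simp: sat_bigconj)
      ultimately show ?thesis by blast
    next
      case b
      have "\<forall>a\<in>verts H1. \<exists>\<phi>. fv \<phi> \<subseteq> insert x S \<and> qr \<phi> \<le> m \<and> \<not> (sat H1 (m1(x:=a)) \<phi> = sat H2 (m2(x:=b)) \<phi>)"
      proof
        fix a assume "a \<in> verts H1"
        then have "\<not> efg m H1 (m1(x:=a)) H2 (m2(x:=b)) (insert x S)" using b(2) by blast
        then show "\<exists>\<phi>. fv \<phi> \<subseteq> insert x S \<and> qr \<phi> \<le> m \<and> \<not> (sat H1 (m1(x:=a)) \<phi> = sat H2 (m2(x:=b)) \<phi>)"
          by (rule Suc.IH)
      qed
      from bchoice[OF this] obtain g where g: "\<forall>a\<in>verts H1. fv (g a) \<subseteq> insert x S \<and> qr (g a) \<le> m \<and> \<not> (sat H1 (m1(x:=a)) (g a) = sat H2 (m2(x:=b)) (g a))"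
        by blast
      define h where "h a = (if sat H2 (m2(x:=b)) (g a) then g a else Neg (g a))" for a
      have h: "\<forall>a\<in>verts H1. fv (h a) \<subseteq> insert x S \<and> qr (h a) \<le> m \<and> \<not> sat H1 (m1(x:=a)) (h a) \<and> sat H2 (m2(x:=b)) (h a)"
        using g unfolding h_def by auto
      obtain as where as: "set as = verts H1" using finite_list[OF assms(1)] by blast
      define \<Phi> where "\<Phi> = Ex x (bigconj x (map h as))"
      have "fv \<Phi> \<subseteq> S" unfolding \<Phi>_def using fv_bigconj[of x "map h as"] h as by auto
      moreover have "qr \<Phi> \<le> Suc m" unfolding \<Phi>_def using qr_bigconj[of "map h as" m x] h as by auto
      moreover have "\<not> sat H1 m1 \<Phi>" unfolding \<Phi>_def using h as by (auto simp: sat_bigconj)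
      moreover have "sat H2 m2 \<Phi>" unfolding \<Phi>_def using b(1) h as by (auto simp: sat_bigconj)
      ultimately show ?thesis by blast
    qed
  qed
qed

lemma tp_efg:
  assumes "tp k H1 = tp k H2" "finite (verts H1)" "finite (verts H2)"
  shows "efg k H1 m1 H2 m2 {}"
proof (rule ccontr)
  assume "\<not> efg k H1 m1 H2 m2 {}"
  then obtain \<phi> where \<phi>: "fv \<phi> \<subseteq> {}" "qr \<phi> \<le> k" "\<not> (sat H1 m1 \<phi> = sat H2 m2 \<phi>)"
    using distinguish[OF assms(2,3)] by blast
  have ind1: "\<And>\<nu>. sat H1 \<nu> \<phi> = sat H1 m1 \<phi>" by (rule sat_cong) (use \<phi>(1) in blast)
  have ind2: "\<And>\<nu>. sat H2 \<nu> \<phi> = sat H2 m2 \<phi>" by (rule sat_cong) (use \<phi>(1) in blast)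
  show False
  proof (cases "sat H1 m1 \<phi>")
    case True
    then have "\<phi> \<in> tp k H1" using \<phi> ind1 unfolding tp_def models_def by auto
    then have "\<phi> \<in> tp k H2" using assms(1) by simp
    then have "sat H2 m2 \<phi>" unfolding tp_def models_def by auto
    then show False using True \<phi>(3) by simp
  next
    case False
    then have "sat H2 m2 \<phi>" using \<phi>(3) by simp
    then have "\<phi> \<in> tp k H2" using \<phi> ind2 unfolding tp_def models_def by auto
    then have "\<phi> \<in> tp k H1" using assms(1) by simp
    then have "sat H1 m1 \<phi>" unfolding tp_def models_def by auto
    then show False using False by simp
  qed
qed

lemma pow_split: "(2::nat)^Suc m - 1 = (2^m - 1) + 2^m"
proof -
  have "(1::nat) \<le> 2^m" by simp
  then show ?thesis by simp
qed

lemma efg_dist: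
  "efg m H1 m1 H2 m2 S \<Longrightarrow> i \<in> S \<Longrightarrow> j \<in> S \<Longrightarrow> m2 ` S \<subseteq> verts H2 \<Longrightarrow>
   reach H1 (2^m) (m1 i) (m1 j) \<Longrightarrow> reach H2 (2^m) (m2 i) (m2 j)"
proof (induction m arbitrary: m1 m2 S i j)
  case 0
  have p: "patom H1 m1 H2 m2 S" using efg_patom[OF 0(1)] .
  have vi: "m2 i \<in> verts H2" "m2 j \<in> verts H2" using 0 by auto
  from 0(5) have "reach H1 0 (m1 i) (m1 j) \<or> (\<exists>z. reach H1 0 (m1 i) z \<and> adj H1 z (m1 j) \<and> m1 j \<in> verts H1)"
    by simp
  then show ?case
  proof
    assume "reach H1 0 (m1 i) (m1 j)"
    then have "m2 i = m2 j" using p 0(2,3) unfolding patom_def by auto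
    then show ?thesis using vi by simp
  next
    assume "\<exists>z. reach H1 0 (m1 i) z \<and> adj H1 z (m1 j) \<and> m1 j \<in> verts H1"
    then have "adj H1 (m1 i) (m1 j)" by auto
    then have "adj H2 (m2 i) (m2 j)" using p 0(2,3) unfolding patom_def by auto
    then show ?thesis using vi by auto
  qed
next
  case (Suc m)
  have "reach H1 (2^m + 2^m) (m1 i) (m1 j)" using Suc.prems(5) by (simp add: mult_2)
  from reach_mid[OF this] obtain z where z: "reach H1 (2^m) (m1 i) z" "reach H1 (2^m) z (m1 j)" by blast
  have zv: "z \<in> verts H1" using reach_verts[OF z(1)] by blast
  define l where "l = Suc (i + j)"
  have lij: "l \<noteq> i" "l \<noteq> j" unfolding l_def by auto
  obtain b where b: "b \<in> verts H2" "efg m H1 (m1(l:=z)) H2 (m2(l:=b)) (insert l S)"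
    using efg_forth[OF Suc.prems(1) zv] by blast
  have vs: "(m2(l:=b)) ` insert l S \<subseteq> verts H2" using Suc.prems(4) b(1) by auto
  have r1: "reach H1 (2^m) ((m1(l:=z)) i) ((m1(l:=z)) l)" using z(1) lij by simp
  have r2: "reach H1 (2^m) ((m1(l:=z)) l) ((m1(l:=z)) j)" using z(2) lij by simp
  have "reach H2 (2^m) ((m2(l:=b)) i) ((m2(l:=b)) l)"
    using Suc.IH[OF b(2) _ _ vs r1] Suc.prems(2) by simp
  then have t1: "reach H2 (2^m) (m2 i) b" using lij by simp
  have "reach H2 (2^m) ((m2(l:=b)) l) ((m2(l:=b)) j)"
    using Suc.IH[OF b(2) _ _ vs r2] Suc.prems(3) by simp
  then have t2: "reach H2 (2^m) b (m2 j)" using lij by simp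
  have "reach H2 (2^m + 2^m) (m2 i) (m2 j)" using reach_trans[OF t1 t2] .
  then show ?case by (simp add: mult_2)
qed

lemma efg_dist_col:
  "efg m H1 m1 H2 m2 S \<Longrightarrow> i \<in> S \<Longrightarrow> m2 ` S \<subseteq> verts H2 \<Longrightarrow> u \<in> colr H1 c \<Longrightarrow>
   reach H1 (2^m - 1) u (m1 i) \<Longrightarrow> \<exists>u'\<in>colr H2 c. reach H2 (2^m - 1) u' (m2 i)"
proof (induction m arbitrary: m1 m2 S i u)
  case 0
  have p: "patom H1 m1 H2 m2 S" using efg_patom[OF 0(1)] .
  have vi: "m2 i \<in> verts H2" using 0 by auto
  have "u = m1 i" using 0(5) by simp
  then have "m2 i \<in> colr H2 c" using p 0(2,4) unfolding patom_def by auto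
  then show ?case using vi by auto
next
  case (Suc m)
  have "reach H1 ((2^m - 1) + 2^m) u (m1 i)" using Suc.prems(5) unfolding pow_split .
  from reach_mid[OF this] obtain z where z: "reach H1 (2^m - 1) u z" "reach H1 (2^m) z (m1 i)" by blast
  have zv: "z \<in> verts H1" using reach_verts[OF z(1)] by blast
  define l where "l = Suc i"
  have li: "l \<noteq> i" unfolding l_def by auto
  obtain b where b: "b \<in> verts H2" "efg m H1 (m1(l:=z)) H2 (m2(l:=b)) (insert l S)"
    using efg_forth[OF Suc.prems(1) zv] by blast
  have vs: "(m2(l:=b)) ` insert l S \<subseteq> verts H2" using Suc.prems(3) b(1) by auto
  have r1: "reach H1 (2^m - 1) u ((m1(l:=z)) l)" using z(1) by simp
  obtain u' where u': "u' \<in> colr H2 c" "reach H2 (2^m - 1) u' ((m2(l:=b)) l)"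
    using Suc.IH[OF b(2) _ vs Suc.prems(4) r1] by blast
  have r2: "reach H1 (2^m) ((m1(l:=z)) l) ((m1(l:=z)) i)" using z(2) li by simp
  have "reach H2 (2^m) ((m2(l:=b)) l) ((m2(l:=b)) i)"
    using efg_dist[OF b(2) _ _ vs r2] Suc.prems(2) by simp
  then have t2: "reach H2 (2^m) b (m2 i)" using li by simp
  have t1: "reach H2 (2^m - 1) u' b" using u'(2) by simp
  have "reach H2 ((2^m - 1) + 2^m) u' (m2 i)" using reach_trans[OF t1 t2] .
  then have "reach H2 (2^Suc m - 1) u' (m2 i)" unfolding pow_split .
  then show ?case using u'(1) by blast
qed


definition LL :: "('a, 'c) cgraph \<Rightarrow> nat \<Rightarrow> 'a set \<Rightarrow> ('a, 'c option) cgraph" where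
  "LL G k A = induced (expand G A) (nbhd G (2 ^ (k - 1) - 1) A)"

definition muA :: "nat set \<Rightarrow> (nat \<Rightarrow> 'a) \<Rightarrow> (nat \<Rightarrow> 'a) \<Rightarrow> nat \<Rightarrow> 'a" where
  "muA V nL nR = (\<lambda>i. if i \<in> V then nL i else nR i)"

definition muB :: "nat set \<Rightarrow> (nat \<Rightarrow> 'a) \<Rightarrow> (nat \<Rightarrow> 'a) \<Rightarrow> nat \<Rightarrow> 'a" where
  "muB V nL nR = (\<lambda>i. if i \<in> V then nR i else nL i)"

definition idsOK :: "('a, 'c) cgraph \<Rightarrow> 'a set \<Rightarrow> nat \<Rightarrow> (nat \<Rightarrow> 'a) \<Rightarrow> (nat \<Rightarrow> 'a) \<Rightarrow> (nat \<Rightarrow> 'a)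
   \<Rightarrow> (nat \<Rightarrow> 'a) \<Rightarrow> nat set \<Rightarrow> nat set \<Rightarrow> bool" where
  "idsOK G U m nL nR fA fB Vi P \<longleftrightarrow>
     (\<forall>i\<in>Vi. nL i = nR i \<and> nL i \<in> verts G \<and> (\<forall>u\<in>U. \<not> reach G (2^m - 1) u (nL i)) \<and>
        (\<forall>j\<in>P. \<not> reach G (2^m) (fA j) (nL i) \<and> \<not> reach G (2^m) (fB j) (nL i)))"

definition depOK :: "('a, 'c) cgraph \<Rightarrow> nat \<Rightarrow> 'a set \<Rightarrow> 'a set \<Rightarrow> nat \<Rightarrow> (nat \<Rightarrow> 'a) \<Rightarrow> (nat \<Rightarrow> 'a)
   \<Rightarrow> nat set \<Rightarrow> bool" where
  "depOK G k A B m fA fB P \<longleftrightarrow>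
     (\<forall>j\<in>P. (\<exists>u\<in>A. reach G (2^(k-1) - 2^m) u (fA j)) \<and> (\<exists>u\<in>B. reach G (2^(k-1) - 2^m) u (fB j)))"

definition Inv :: "('a, 'c) cgraph \<Rightarrow> nat \<Rightarrow> 'a set \<Rightarrow> 'a set \<Rightarrow> nat \<Rightarrow> (nat \<Rightarrow> 'a) \<Rightarrow> (nat \<Rightarrow> 'a)
   \<Rightarrow> nat set \<Rightarrow> nat set \<Rightarrow> nat set \<Rightarrow> bool" where
  "Inv G k A B m nL nR Vi Vab Vba \<longleftrightarrow>
     Vi \<inter> Vab = {} \<and> Vi \<inter> Vba = {} \<and> Vab \<inter> Vba = {} \<and> m < k \<and>
     idsOK G (A \<union> B) m nL nR (muA Vab nL nR) (muB Vab nL nR) Vi (Vab \<union> Vba) \<and>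
     depOK G k A B m (muA Vab nL nR) (muB Vab nL nR) (Vab \<union> Vba) \<and>
     efg m (LL G k A) (muA Vab nL nR) (LL G k B) (muB Vab nL nR) (Vab \<union> Vba)"

lemma muA_ins: "muA (insert x V) (nL(x:=a)) (nR(x:=b)) = (muA V nL nR)(x:=a)"
  unfolding muA_def by auto

lemma muB_ins: "muB (insert x V) (nL(x:=a)) (nR(x:=b)) = (muB V nL nR)(x:=b)"
  unfolding muB_def by auto

lemma muA_out: "x \<notin> V \<Longrightarrow> muA V (nL(x:=a)) (nR(x:=b)) = (muA V nL nR)(x:=b)"
  unfolding muA_def by auto

lemma muB_out: "x \<notin> V \<Longrightarrow> muB V (nL(x:=a)) (nR(x:=b)) = (muB V nL nR)(x:=a)"
  unfolding muB_def by auto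

lemma muA_swap: "muA V nR nL = muB V nL nR"
  unfolding muA_def muB_def by simp

lemma muB_swap: "muB V nR nL = muA V nL nR"
  unfolding muA_def muB_def by simp

lemma mu_relabel:
  assumes "Vab \<inter> Vba = {}" "j \<in> Vab \<union> Vba"
  shows "muA Vba nL nR j = muB Vab nL nR j" "muB Vba nL nR j = muA Vab nL nR j"
  using assms unfolding muA_def muB_def by auto

lemma idsOK_swap: "idsOK G U m nL nR fA fB Vi P \<Longrightarrow> U = U' \<Longrightarrow> idsOK G U' m nR nL fB fA Vi P"
  unfolding idsOK_def
proof (intro ballI)
  fix i assume i: "i \<in> Vi" and a: "\<forall>i\<in>Vi. nL i = nR i \<and> nL i \<in> verts G \<and> (\<forall>u\<in>U. \<not> reach G (2^m - 1) u (nL i)) \<and>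
        (\<forall>j\<in>P. \<not> reach G (2^m) (fA j) (nL i) \<and> \<not> reach G (2^m) (fB j) (nL i))" and uu: "U = U'"
  have h: "nL i = nR i \<and> nL i \<in> verts G \<and> (\<forall>u\<in>U. \<not> reach G (2^m - 1) u (nL i)) \<and>
        (\<forall>j\<in>P. \<not> reach G (2^m) (fA j) (nL i) \<and> \<not> reach G (2^m) (fB j) (nL i))" using a i by (rule bspec)
  have eq: "nR i = nL i" using h by (rule conjunct1[THEN sym])
  show "nR i = nL i \<and> nR i \<in> verts G \<and> (\<forall>u\<in>U'. \<not> reach G (2^m - 1) u (nR i)) \<and>
        (\<forall>j\<in>P. \<not> reach G (2^m) (fB j) (nR i) \<and> \<not> reach G (2^m) (fA j) (nR i))"
    unfolding eq uu[symmetric] using h by blast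
qed

lemma depOK_swap: "depOK G k A B m fA fB P \<Longrightarrow> depOK G k B A m fB fA P"
  unfolding depOK_def
proof (intro ballI conjI)
  fix j assume a: "\<forall>j\<in>P. (\<exists>u\<in>A. reach G (2^(k-1) - 2^m) u (fA j)) \<and> (\<exists>u\<in>B. reach G (2^(k-1) - 2^m) u (fB j))"
    and j: "j \<in> P"
  have h: "(\<exists>u\<in>A. reach G (2^(k-1) - 2^m) u (fA j)) \<and> (\<exists>u\<in>B. reach G (2^(k-1) - 2^m) u (fB j))"
    using a j by (rule bspec)
  show "\<exists>u\<in>B. reach G (2^(k-1) - 2^m) u (fB j)" using h by (rule conjunct2)
  show "\<exists>u\<in>A. reach G (2^(k-1) - 2^m) u (fA j)" using h by (rule conjunct1)
qed

lemma InvD: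
  assumes "Inv G k A B m nL nR Vi Vab Vba"
  shows "Vi \<inter> Vab = {}" "Vi \<inter> Vba = {}" "Vab \<inter> Vba = {}" "m < k"
    "idsOK G (A \<union> B) m nL nR (muA Vab nL nR) (muB Vab nL nR) Vi (Vab \<union> Vba)"
    "depOK G k A B m (muA Vab nL nR) (muB Vab nL nR) (Vab \<union> Vba)"
    "efg m (LL G k A) (muA Vab nL nR) (LL G k B) (muB Vab nL nR) (Vab \<union> Vba)"
  using assms unfolding Inv_def by auto

lemma InvI:
  assumes "Vi \<inter> Vab = {}" "Vi \<inter> Vba = {}" "Vab \<inter> Vba = {}" "m < k"
    "idsOK G (A \<union> B) m nL nR (muA Vab nL nR) (muB Vab nL nR) Vi (Vab \<union> Vba)"
    "depOK G k A B m (muA Vab nL nR) (muB Vab nL nR) (Vab \<union> Vba)"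
    "efg m (LL G k A) (muA Vab nL nR) (LL G k B) (muB Vab nL nR) (Vab \<union> Vba)"
  shows "Inv G k A B m nL nR Vi Vab Vba"
  unfolding Inv_def by (intro conjI assms)

lemma Inv_swap: "Inv G k A B m nL nR Vi Vab Vba \<Longrightarrow> Inv G k B A m nR nL Vi Vab Vba"
proof -
  assume a: "Inv G k A B m nL nR Vi Vab Vba"
  let ?P = "Vab \<union> Vba"
  have u: "A \<union> B = B \<union> A" by (rule Un_commute)
  have ids': "idsOK G (B \<union> A) m nR nL (muB Vab nL nR) (muA Vab nL nR) Vi ?P"
    by (rule idsOK_swap[OF InvD(5)[OF a] u])
  have dep': "depOK G k B A m (muB Vab nL nR) (muA Vab nL nR) ?P" by (rule depOK_swap[OF InvD(6)[OF a]])
  have e1: "efg m (LL G k B) (muB Vab nL nR) (LL G k A) (muA Vab nL nR) ?P" using efg_sym[OF InvD(7)[OF a]] .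
  show ?thesis
    apply (rule InvI)
    using InvD(1-4)[OF a] ids' dep' e1 unfolding muA_swap[of Vab nR nL] muB_swap[of Vab nR nL] by simp_all
qed

lemma pow_facts:
  assumes "Suc m < k"
  shows "(2::nat)^(k-1) - 2^Suc m + 2^m = 2^(k-1) - 2^m"
    "(2::nat)^m - 1 \<le> 2^(k-1) - 2^m"
    "(2::nat)^(k-1) - 2^Suc m \<le> 2^(k-1) - 2^m"
proof -
  have "(2::nat)^Suc m \<le> 2^(k-1)" by (rule power_increasing) (use assms in auto)
  moreover have "(1::nat) \<le> 2^m" by simp
  moreover have "(2::nat)^Suc m = 2 * 2^m" by simp
  ultimately show "(2::nat)^(k-1) - 2^Suc m + 2^m = 2^(k-1) - 2^m"
    "(2::nat)^m - 1 \<le> 2^(k-1) - 2^m" "(2::nat)^(k-1) - 2^Suc m \<le> 2^(k-1) - 2^m" by linarith+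
qed

lemma pow_r: "(2::nat)^(k-1) - 2^m \<le> 2^(k-1) - 1"
proof -
  have "(1::nat) \<le> 2^m" by simp
  then show ?thesis by linarith
qed

lemma reach_ind: "reach (induced (expand G A) N) t u v \<Longrightarrow> reach G t u v"
proof (induction t arbitrary: v)
  case 0 then show ?case by (auto simp: induced_def expand_def)
next
  case (Suc t)
  then show ?case by (auto simp: induced_def expand_def)
qed

lemma reach_LL: "reach (LL G k A) t u v \<Longrightarrow> reach G t u v"
  unfolding LL_def by (rule reach_ind)

lemma nbhd_iff: "x \<in> nbhd G t A \<longleftrightarrow> x \<in> verts G \<and> (\<exists>u\<in>A. reach G t u x)"
  unfolding nbhd_def gdist_le by simp

lemma LL_verts: "verts (LL G k A) = nbhd G (2^(k-1) - 1) A"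
  unfolding LL_def induced_def expand_def nbhd_def by auto

lemma LL_adj: "adj (LL G k A) u v \<longleftrightarrow> adj G u v \<and> u \<in> nbhd G (2^(k-1) - 1) A \<and> v \<in> nbhd G (2^(k-1) - 1) A"
  unfolding LL_def induced_def expand_def by simp

lemma LL_colS: "colr (LL G k A) (Some c) = colr G c \<inter> nbhd G (2^(k-1) - 1) A"
  unfolding LL_def induced_def expand_def by simp

lemma LL_colN: "colr (LL G k A) None = A \<inter> nbhd G (2^(k-1) - 1) A"
  unfolding LL_def induced_def expand_def by simp

lemma far_lemma:
  assumes "\<forall>u\<in>U. \<not> reach G (2^Suc m - 1) u e" "\<forall>j\<in>P. \<not> reach G (2^Suc m) (f j) e"
    "(\<exists>u\<in>U. reach G (2^m - 1) u z) \<or> (\<exists>j\<in>P. reach G (2^m) (f j) z)"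
  shows "\<not> reach G (2^m) z e"
proof
  assume r: "reach G (2^m) z e"
  from assms(3) show False
  proof
    assume "\<exists>u\<in>U. reach G (2^m - 1) u z"
    then obtain u where u: "u \<in> U" "reach G (2^m - 1) u z" by blast
    have "reach G (2^m - 1 + 2^m) u e" using reach_trans[OF u(2) r] .
    then have "reach G (2^Suc m - 1) u e" unfolding pow_split .
    then show False using assms(1) u(1) by blast
  next
    assume "\<exists>j\<in>P. reach G (2^m) (f j) z"
    then obtain j where j: "j \<in> P" "reach G (2^m) (f j) z" by blast
    have "reach G (2^m + 2^m) (f j) e" using reach_trans[OF j(2) r] .
    then have "reach G (2^Suc m) (f j) e" by (simp add: mult_2)
    then show False using assms(2) j(1) by blast
  qed
qed

lemma not_reach_mono: "\<not> reach G t u v \<Longrightarrow> s \<le> t \<Longrightarrow> \<not> reach G s u v"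
  using reach_mono[of G s u v t] by blast

locale gsetup =
  fixes G :: "('a, 'c) cgraph" and k :: nat and A B :: "'a set"
  assumes wf: "wf_cgraph G" and k1: "1 \<le> k" and AV: "A \<subseteq> verts G" and BV: "B \<subseteq> verts G"
    and far: "\<forall>a\<in>A. \<forall>b\<in>B. \<not> reach G (2^k) a b"
    and ef: "\<forall>m1 m2. efg k (LL G k A) m1 (LL G k B) m2 {}"
begin

lemma symG: "\<forall>u v. adj G u v \<longrightarrow> adj G v u"
  using wf unfolding wf_cgraph_def by blast

lemma rsym: "reach G t u v \<Longrightarrow> reach G t v u"
  using reach_sym[OF symG] .

lemma swap: "gsetup G k B A"
proof
  show "wf_cgraph G" "1 \<le> k" "B \<subseteq> verts G" "A \<subseteq> verts G" using wf k1 AV BV by auto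
  show "\<forall>a\<in>B. \<forall>b\<in>A. \<not> reach G (2^k) a b"
  proof (intro ballI notI)
    fix a b assume "a \<in> B" "b \<in> A" "reach G (2^k) a b"
    then show False using far rsym[OF \<open>reach G (2^k) a b\<close>] by blast
  qed
  show "\<forall>m1 m2. efg k (LL G k B) m1 (LL G k A) m2 {}"
  proof (intro allI)
    fix m1 m2 show "efg k (LL G k B) m1 (LL G k A) m2 {}" using efg_sym[OF ef[rule_format, of m2 m1]] .
  qed
qed

lemma sep:
  assumes "u \<in> nbhd G (2^(k-1) - 1) A" "v \<in> nbhd G (2^(k-1) - 1) B"
  shows "u \<noteq> v \<and> \<not> adj G u v \<and> \<not> adj G v u"
proof -
  let ?r = "2^(k-1) - 1 :: nat"
  obtain a where a: "a \<in> A" "reach G ?r a u" using assms(1) unfolding nbhd_iff by blast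
  obtain b where b: "b \<in> B" "reach G ?r b v" using assms(2) unfolding nbhd_iff by blast
  have vb: "reach G ?r v b" using rsym[OF b(2)] .
  have kk: "?r + 1 + ?r \<le> 2^k"
  proof -
    have "k = Suc (k - 1)" using k1 by simp
    then have "(2::nat)^k = 2 * 2^(k-1)" by (metis power_Suc)
    moreover have "(1::nat) \<le> 2^(k-1)" by simp
    ultimately show ?thesis by linarith
  qed
  have "u \<noteq> v"
  proof
    assume "u = v"
    then have ub: "reach G ?r u b" using vb by simp
    have "reach G (?r + ?r) a b" using reach_trans[OF a(2) ub] .
    moreover have "?r + ?r \<le> 2^k" using kk by linarith
    ultimately have "reach G (2^k) a b" by (rule reach_mono)
    then show False using far a(1) b(1) by blast
  qed
  moreover have "\<not> adj G u v"
  proof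
    assume "adj G u v"
    moreover have "u \<in> verts G" "v \<in> verts G" using reach_verts[OF a(2)] reach_verts[OF vb] by auto
    ultimately have uv: "reach G 1 u v" by (rule reach_adj)
    have "reach G (?r + 1) a v" using reach_trans[OF a(2) uv] .
    then have "reach G (?r + 1 + ?r) a b" by (rule reach_trans[OF _ vb])
    then have "reach G (2^k) a b" by (rule reach_mono[OF _ kk])
    then show False using far a(1) b(1) by blast
  qed
  moreover have "\<not> adj G v u"
  proof
    assume "adj G v u"
    then have "adj G u v" using symG by blast
    then show False using \<open>\<not> adj G u v\<close> by simp
  qed
  ultimately show ?thesis by simp
qed

lemma lift:
  assumes "reach G t v x" "u \<in> A" "reach G D u v" "D + t \<le> 2^(k-1) - 1"
  shows "reach (LL G k A) t v x"
  using assms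
proof (induction t arbitrary: x)
  case 0
  then have vx: "v = x" "v \<in> verts G" by auto
  have "reach G (2^(k-1) - 1) u v" using reach_mono[OF 0(3)] 0(4) by simp
  then have "v \<in> nbhd G (2^(k-1) - 1) A" unfolding nbhd_iff using vx(2) 0(2) by blast
  then show ?case using vx by (simp add: LL_verts)
next
  case (Suc t)
  show ?case
  proof (cases "reach G t v x")
    case True
    have "reach (LL G k A) t v x" using Suc.IH[OF True Suc.prems(2,3)] Suc.prems(4) by simp
    then show ?thesis using reach_mono[of _ t v x "Suc t"] by simp
  next
    case False
    then obtain z where z: "reach G t v z" "adj G z x" "x \<in> verts G" using Suc.prems(1) by auto
    have rz: "reach (LL G k A) t v z" using Suc.IH[OF z(1) Suc.prems(2,3)] Suc.prems(4) by simp
    have uz: "reach G (D + t) u z" using reach_trans[OF Suc.prems(3) z(1)] .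
    have "reach G (2^(k-1) - 1) u z" using reach_mono[OF uz] Suc.prems(4) by simp
    then have zN: "z \<in> nbhd G (2^(k-1) - 1) A" unfolding nbhd_iff using reach_verts[OF z(1)] Suc.prems(2) by blast
    have ux: "reach G (Suc (D + t)) u x" using uz z(2,3) by auto
    have "reach G (2^(k-1) - 1) u x" using reach_mono[OF ux] Suc.prems(4) by simp
    then have xN: "x \<in> nbhd G (2^(k-1) - 1) A" unfolding nbhd_iff using z(3) Suc.prems(2) by blast
    have "adj (LL G k A) z x" unfolding LL_adj using z(2) zN xN by blast
    moreover have "x \<in> verts (LL G k A)" using xN by (simp add: LL_verts)
    ultimately have "\<exists>z. reach (LL G k A) t v z \<and> adj (LL G k A) z x \<and> x \<in> verts (LL G k A)"
      using rz by blast
    then show ?thesis by (simp only: reach.simps(2)) blast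
  qed
qed

end


lemma idsOK_gen:
  assumes "idsOK G U m nL nR fA fB Vi P" "Vi' \<subseteq> Vi" "U' \<subseteq> U"
    "\<forall>j\<in>P'. j \<in> P \<and> ((fA' j = fA j \<and> fB' j = fB j) \<or> (fA' j = fB j \<and> fB' j = fA j))"
  shows "idsOK G U' m nL nR fA' fB' Vi' P'"
  unfolding idsOK_def
proof (intro ballI)
  fix i assume i: "i \<in> Vi'"
  then have i2: "i \<in> Vi" using assms(2) by blast
  have h: "nL i = nR i \<and> nL i \<in> verts G \<and> (\<forall>u\<in>U. \<not> reach G (2^m - 1) u (nL i)) \<and>
        (\<forall>j\<in>P. \<not> reach G (2^m) (fA j) (nL i) \<and> \<not> reach G (2^m) (fB j) (nL i))"
    using assms(1) i2 unfolding idsOK_def by (rule bspec)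
  have h1: "nL i = nR i" using h by (rule conjunct1)
  have hv: "nL i \<in> verts G" using h[THEN conjunct2, THEN conjunct1] .
  have hU: "\<forall>u\<in>U. \<not> reach G (2^m - 1) u (nL i)" using h[THEN conjunct2, THEN conjunct2, THEN conjunct1] .
  have hP: "\<forall>j\<in>P. \<not> reach G (2^m) (fA j) (nL i) \<and> \<not> reach G (2^m) (fB j) (nL i)"
    using h[THEN conjunct2, THEN conjunct2, THEN conjunct2] .
  have h2: "\<forall>u\<in>U'. \<not> reach G (2^m - 1) u (nL i)"
  proof
    fix u assume "u \<in> U'"
    then have "u \<in> U" using assms(3) by blast
    then show "\<not> reach G (2^m - 1) u (nL i)" by (rule bspec[OF hU])
  qed
  have h3: "\<forall>j\<in>P'. \<not> reach G (2^m) (fA' j) (nL i) \<and> \<not> reach G (2^m) (fB' j) (nL i)"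
  proof
    fix j assume j: "j \<in> P'"
    have jj: "j \<in> P" "(fA' j = fA j \<and> fB' j = fB j) \<or> (fA' j = fB j \<and> fB' j = fA j)"
      using assms(4) j by simp_all
    have "\<not> reach G (2^m) (fA j) (nL i) \<and> \<not> reach G (2^m) (fB j) (nL i)" using hP jj(1) by (rule bspec)
    then show "\<not> reach G (2^m) (fA' j) (nL i) \<and> \<not> reach G (2^m) (fB' j) (nL i)" using jj(2) by auto
  qed
  show "nL i = nR i \<and> nL i \<in> verts G \<and> (\<forall>u\<in>U'. \<not> reach G (2^m - 1) u (nL i)) \<and>
        (\<forall>j\<in>P'. \<not> reach G (2^m) (fA' j) (nL i) \<and> \<not> reach G (2^m) (fB' j) (nL i))"
    by (intro conjI h1 hv h2 h3)
qed

lemma idsOK_Suc: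
  assumes "idsOK G U (Suc m) nL nR fA fB Vi P"
  shows "idsOK G U m nL nR fA fB Vi P"
  unfolding idsOK_def
proof (intro ballI)
  fix i assume i: "i \<in> Vi"
  have h: "nL i = nR i \<and> nL i \<in> verts G \<and> (\<forall>u\<in>U. \<not> reach G (2^Suc m - 1) u (nL i)) \<and>
        (\<forall>j\<in>P. \<not> reach G (2^Suc m) (fA j) (nL i) \<and> \<not> reach G (2^Suc m) (fB j) (nL i))"
    using assms i unfolding idsOK_def by (rule bspec)
  have h1: "nL i = nR i" using h by (rule conjunct1)
  have hv: "nL i \<in> verts G" using h[THEN conjunct2, THEN conjunct1] .
  have hU: "\<forall>u\<in>U. \<not> reach G (2^Suc m - 1) u (nL i)" using h[THEN conjunct2, THEN conjunct2, THEN conjunct1] .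
  have hP: "\<forall>j\<in>P. \<not> reach G (2^Suc m) (fA j) (nL i) \<and> \<not> reach G (2^Suc m) (fB j) (nL i)"
    using h[THEN conjunct2, THEN conjunct2, THEN conjunct2] .
  have l1: "(2::nat)^m - 1 \<le> 2^Suc m - 1" "(2::nat)^m \<le> 2^Suc m" by simp_all
  have h2: "\<forall>u\<in>U. \<not> reach G (2^m - 1) u (nL i)"
  proof
    fix u assume "u \<in> U"
    with hU have "\<not> reach G (2^Suc m - 1) u (nL i)" by (rule bspec)
    then show "\<not> reach G (2^m - 1) u (nL i)" using reach_mono[OF _ l1(1), of G u "nL i"] by blast
  qed
  have h3: "\<forall>j\<in>P. \<not> reach G (2^m) (fA j) (nL i) \<and> \<not> reach G (2^m) (fB j) (nL i)"
  proof
    fix j assume "j \<in> P"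
    with hP have "\<not> reach G (2^Suc m) (fA j) (nL i) \<and> \<not> reach G (2^Suc m) (fB j) (nL i)" by (rule bspec)
    then show "\<not> reach G (2^m) (fA j) (nL i) \<and> \<not> reach G (2^m) (fB j) (nL i)"
      using reach_mono[OF _ l1(2), of G "fA j" "nL i"] reach_mono[OF _ l1(2), of G "fB j" "nL i"] by blast
  qed
  show "nL i = nR i \<and> nL i \<in> verts G \<and> (\<forall>u\<in>U. \<not> reach G (2^m - 1) u (nL i)) \<and>
        (\<forall>j\<in>P. \<not> reach G (2^m) (fA j) (nL i) \<and> \<not> reach G (2^m) (fB j) (nL i))"
    by (intro conjI h1 hv h2 h3)
qed

lemma depOK_gen:
  assumes "depOK G k A B m fA fB P" "\<forall>j\<in>P'. j \<in> P \<and> fA' j = fA j \<and> fB' j = fB j" "t \<le> m"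
    "m < k"
  shows "depOK G k A B t fA' fB' P'"
  unfolding depOK_def
proof (intro ballI conjI)
  fix j assume j: "j \<in> P'"
  have jj: "j \<in> P" "fA' j = fA j" "fB' j = fB j" using assms(2) j by simp_all
  have h: "(\<exists>u\<in>A. reach G (2^(k-1) - 2^m) u (fA j)) \<and> (\<exists>u\<in>B. reach G (2^(k-1) - 2^m) u (fB j))"
    using assms(1) jj(1) unfolding depOK_def by (rule bspec)
  have le: "(2::nat)^(k-1) - 2^m \<le> 2^(k-1) - 2^t"
  proof -
    have "(2::nat)^m \<le> 2^(k-1)" by (rule power_increasing) (use assms(4) in auto)
    moreover have "(2::nat)^t \<le> 2^m" by (rule power_increasing) (use assms(3) in auto)
    ultimately show ?thesis by linarith
  qed
  obtain u where u: "u \<in> A" "reach G (2^(k-1) - 2^m) u (fA j)" using h by blast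
  show "\<exists>u\<in>A. reach G (2^(k-1) - 2^t) u (fA' j)" using u(1) reach_mono[OF u(2) le] jj(2) by auto
  obtain v where v: "v \<in> B" "reach G (2^(k-1) - 2^m) v (fB j)" using h by blast
  show "\<exists>u\<in>B. reach G (2^(k-1) - 2^t) u (fB' j)" using v(1) reach_mono[OF v(2) le] jj(3) by auto
qed

lemma Inv_relabel:
  assumes a: "Inv G k A B m nL nR Vi Vab Vba"
  shows "Inv G k B A m nL nR Vi Vba Vab"
proof -
  have d: "Vi \<inter> Vab = {}" "Vi \<inter> Vba = {}" "Vab \<inter> Vba = {}" "m < k" using InvD(1-4)[OF a] .
  let ?P = "Vab \<union> Vba"
  have P: "Vba \<union> Vab = ?P" by blast
  have ag: "\<forall>j\<in>?P. muA Vba nL nR j = muB Vab nL nR j \<and> muB Vba nL nR j = muA Vab nL nR j"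
    using mu_relabel[OF d(3)] by blast
  have ids: "idsOK G (B \<union> A) m nL nR (muA Vba nL nR) (muB Vba nL nR) Vi (Vba \<union> Vab)"
    by (rule idsOK_gen[OF InvD(5)[OF a]]) (use ag in auto)
  have dep: "depOK G k B A m (muA Vba nL nR) (muB Vba nL nR) (Vba \<union> Vab)"
    by (rule depOK_gen[OF depOK_swap[OF InvD(6)[OF a]]]) (use ag d(4) in auto)
  have e: "efg m (LL G k B) (muA Vba nL nR) (LL G k A) (muB Vba nL nR) (Vba \<union> Vab)"
    by (rule efg_cong[OF efg_sym[OF InvD(7)[OF a]]]) (use ag in auto)
  show ?thesis by (rule InvI) (use d ids dep e in auto)
qed

lemma Inv_remove:
  assumes a: "Inv G k A B m nL nR Vi Vab Vba"
  shows "Inv G k A B m nL nR (Vi - {x}) (Vab - {x}) (Vba - {x})"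
proof -
  have d: "Vi \<inter> Vab = {}" "Vi \<inter> Vba = {}" "Vab \<inter> Vba = {}" "m < k" using InvD(1-4)[OF a] .
  let ?P = "Vab \<union> Vba"
  have ag: "\<forall>j\<in>(Vab - {x}) \<union> (Vba - {x}). j \<in> ?P \<and> muA (Vab - {x}) nL nR j = muA Vab nL nR j \<and>
      muB (Vab - {x}) nL nR j = muB Vab nL nR j"
    unfolding muA_def muB_def by auto
  have ids: "idsOK G (A \<union> B) m nL nR (muA (Vab - {x}) nL nR) (muB (Vab - {x}) nL nR) (Vi - {x}) ((Vab - {x}) \<union> (Vba - {x}))"
    by (rule idsOK_gen[OF InvD(5)[OF a]]) (use ag in auto)
  have dep: "depOK G k A B m (muA (Vab - {x}) nL nR) (muB (Vab - {x}) nL nR) ((Vab - {x}) \<union> (Vba - {x}))"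
    by (rule depOK_gen[OF InvD(6)[OF a]]) (use ag d(4) in auto)
  have e: "efg m (LL G k A) (muA (Vab - {x}) nL nR) (LL G k B) (muB (Vab - {x}) nL nR) ((Vab - {x}) \<union> (Vba - {x}))"
    by (rule efg_cong[OF InvD(7)[OF a]]) (use ag in auto)
  show ?thesis by (rule InvI) (use d ids dep e in auto)
qed

lemma near_lemma:
  assumes "\<not> reach G (2^m) p e" "p \<in> verts G" "e \<in> verts G" "\<forall>u v. adj G u v \<longrightarrow> adj G v u"
  shows "p \<noteq> e \<and> \<not> adj G p e \<and> \<not> adj G e p"
proof -
  have "p \<noteq> e"
  proof
    assume "p = e"
    have "reach G (2^m) p p" using reach_refl[OF assms(2)] .
    then have "reach G (2^m) p e" using \<open>p = e\<close> by simp
    then show False using assms(1) by simp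
  qed
  moreover have "\<not> adj G p e"
  proof
    assume "adj G p e"
    then have "reach G 1 p e" using assms(2,3) by (rule reach_adj)
    then have "reach G (2^m) p e" using reach_mono[of G 1 p e "2^m"] by simp
    then show False using assms(1) by simp
  qed
  moreover have "\<not> adj G e p"
  proof
    assume "adj G e p"
    then have "adj G p e" using assms(4) by blast
    then show False using calculation(2) by simp
  qed
  ultimately show ?thesis by simp
qed


lemma ids_far:
  assumes "idsOK G U (Suc m) nL nR fA fB Vi P" "i \<in> Vi"
    "(\<exists>u\<in>U. reach G (2^m - 1) u z) \<or> (\<exists>j\<in>P. reach G (2^m) (fA j) z) \<or> (\<exists>j\<in>P. reach G (2^m) (fB j) z)"
  shows "\<not> reach G (2^m) z (nL i)"
proof -
  have h: "nL i = nR i \<and> nL i \<in> verts G \<and> (\<forall>u\<in>U. \<not> reach G (2^Suc m - 1) u (nL i)) \<and>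
        (\<forall>j\<in>P. \<not> reach G (2^Suc m) (fA j) (nL i) \<and> \<not> reach G (2^Suc m) (fB j) (nL i))"
    using assms(1,2) unfolding idsOK_def by (rule bspec)
  have hU: "\<forall>u\<in>U. \<not> reach G (2^Suc m - 1) u (nL i)" using h[THEN conjunct2, THEN conjunct2, THEN conjunct1] .
  have hP: "\<forall>j\<in>P. \<not> reach G (2^Suc m) (fA j) (nL i) \<and> \<not> reach G (2^Suc m) (fB j) (nL i)"
    using h[THEN conjunct2, THEN conjunct2, THEN conjunct2] .
  have hA: "\<forall>j\<in>P. \<not> reach G (2^Suc m) (fA j) (nL i)" using hP by blast
  have hB: "\<forall>j\<in>P. \<not> reach G (2^Suc m) (fB j) (nL i)" using hP by blast
  from assms(3) consider "(\<exists>u\<in>U. reach G (2^m - 1) u z) \<or> (\<exists>j\<in>P. reach G (2^m) (fA j) z)"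
    | "(\<exists>u\<in>U. reach G (2^m - 1) u z) \<or> (\<exists>j\<in>P. reach G (2^m) (fB j) z)" by blast
  then show ?thesis
  proof cases
    case 1 then show ?thesis using far_lemma[OF hU hA] by blast
  next
    case 2 then show ?thesis using far_lemma[OF hU hB] by blast
  qed
qed

lemma idsOK_ins_peb:
  assumes "idsOK G U m nL nR fA fB Vi P" "x \<notin> Vi" "x \<notin> P"
    "\<forall>i\<in>Vi. \<not> reach G (2^m) a (nL i) \<and> \<not> reach G (2^m) b (nL i)"
  shows "idsOK G U m (nL(x:=a')) (nR(x:=b')) (fA(x:=a)) (fB(x:=b)) Vi (insert x P)"
  unfolding idsOK_def
proof (intro ballI)
  fix i assume i: "i \<in> Vi"
  have ix: "i \<noteq> x" using i assms(2) by blast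
  have h: "nL i = nR i \<and> nL i \<in> verts G \<and> (\<forall>u\<in>U. \<not> reach G (2^m - 1) u (nL i)) \<and>
        (\<forall>j\<in>P. \<not> reach G (2^m) (fA j) (nL i) \<and> \<not> reach G (2^m) (fB j) (nL i))"
    using assms(1) i unfolding idsOK_def by (rule bspec)
  have h1: "nL i = nR i" using h by (rule conjunct1)
  have hv: "nL i \<in> verts G" using h[THEN conjunct2, THEN conjunct1] .
  have hU: "\<forall>u\<in>U. \<not> reach G (2^m - 1) u (nL i)" using h[THEN conjunct2, THEN conjunct2, THEN conjunct1] .
  have hP: "\<forall>j\<in>P. \<not> reach G (2^m) (fA j) (nL i) \<and> \<not> reach G (2^m) (fB j) (nL i)"
    using h[THEN conjunct2, THEN conjunct2, THEN conjunct2] .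
  have nx: "\<not> reach G (2^m) a (nL i) \<and> \<not> reach G (2^m) b (nL i)" using assms(4) i by (rule bspec)
  have hP': "\<forall>j\<in>insert x P. \<not> reach G (2^m) ((fA(x:=a)) j) (nL i) \<and> \<not> reach G (2^m) ((fB(x:=b)) j) (nL i)"
  proof
    fix j assume j: "j \<in> insert x P"
    show "\<not> reach G (2^m) ((fA(x:=a)) j) (nL i) \<and> \<not> reach G (2^m) ((fB(x:=b)) j) (nL i)"
    proof (cases "j = x")
      case True then show ?thesis using nx by simp
    next
      case False
      then have "j \<in> P" using j by blast
      with hP have "\<not> reach G (2^m) (fA j) (nL i) \<and> \<not> reach G (2^m) (fB j) (nL i)" by (rule bspec)
      then show ?thesis using False by simp
    qed
  qed
  have e1: "(nL(x:=a')) i = nL i" "(nR(x:=b')) i = nR i" using ix by simp_all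
  show "(nL(x:=a')) i = (nR(x:=b')) i \<and> (nL(x:=a')) i \<in> verts G \<and>
     (\<forall>u\<in>U. \<not> reach G (2^m - 1) u ((nL(x:=a')) i)) \<and>
     (\<forall>j\<in>insert x P. \<not> reach G (2^m) ((fA(x:=a)) j) ((nL(x:=a')) i) \<and> \<not> reach G (2^m) ((fB(x:=b)) j) ((nL(x:=a')) i))"
    unfolding e1 by (intro conjI h1 hv hU hP')
qed

lemma idsOK_ins_id:
  assumes "idsOK G U m nL nR fA fB Vi P" "x \<notin> P" "a \<in> verts G"
    "\<forall>u\<in>U. \<not> reach G (2^m - 1) u a" "\<forall>j\<in>P. \<not> reach G (2^m) (fA j) a \<and> \<not> reach G (2^m) (fB j) a"
  shows "idsOK G U m (nL(x:=a)) (nR(x:=a)) (fA(x:=c)) (fB(x:=d)) (insert x Vi) P"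
  unfolding idsOK_def
proof (intro ballI)
  fix i assume i: "i \<in> insert x Vi"
  have ag: "\<forall>j\<in>P. (fA(x:=c)) j = fA j \<and> (fB(x:=d)) j = fB j" using assms(2) by auto
  show "(nL(x:=a)) i = (nR(x:=a)) i \<and> (nL(x:=a)) i \<in> verts G \<and>
     (\<forall>u\<in>U. \<not> reach G (2^m - 1) u ((nL(x:=a)) i)) \<and>
     (\<forall>j\<in>P. \<not> reach G (2^m) ((fA(x:=c)) j) ((nL(x:=a)) i) \<and> \<not> reach G (2^m) ((fB(x:=d)) j) ((nL(x:=a)) i))"
  proof (cases "i = x")
    case True
    have e1: "(nL(x:=a)) i = a" "(nR(x:=a)) i = a" using True by simp_all
    have hP: "\<forall>j\<in>P. \<not> reach G (2^m) ((fA(x:=c)) j) a \<and> \<not> reach G (2^m) ((fB(x:=d)) j) a"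
      using assms(5) ag by simp
    show ?thesis unfolding e1 by (intro conjI refl assms(3) assms(4) hP)
  next
    case False
    then have i2: "i \<in> Vi" using i by blast
    have h: "nL i = nR i \<and> nL i \<in> verts G \<and> (\<forall>u\<in>U. \<not> reach G (2^m - 1) u (nL i)) \<and>
        (\<forall>j\<in>P. \<not> reach G (2^m) (fA j) (nL i) \<and> \<not> reach G (2^m) (fB j) (nL i))"
      using assms(1) i2 unfolding idsOK_def by (rule bspec)
    have h1: "nL i = nR i" using h by (rule conjunct1)
    have hv: "nL i \<in> verts G" using h[THEN conjunct2, THEN conjunct1] .
    have hU: "\<forall>u\<in>U. \<not> reach G (2^m - 1) u (nL i)" using h[THEN conjunct2, THEN conjunct2, THEN conjunct1] .
    have hP: "\<forall>j\<in>P. \<not> reach G (2^m) (fA j) (nL i) \<and> \<not> reach G (2^m) (fB j) (nL i)"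
      using h[THEN conjunct2, THEN conjunct2, THEN conjunct2] .
    have hP': "\<forall>j\<in>P. \<not> reach G (2^m) ((fA(x:=c)) j) (nL i) \<and> \<not> reach G (2^m) ((fB(x:=d)) j) (nL i)"
      using hP ag by simp
    have e1: "(nL(x:=a)) i = nL i" "(nR(x:=a)) i = nR i" using False by simp_all
    show ?thesis unfolding e1 by (intro conjI h1 hv hU hP')
  qed
qed

lemma depOK_ins:
  assumes "depOK G k A B m fA fB P" "x \<notin> P"
    "\<exists>u\<in>A. reach G (2^(k-1) - 2^m) u a" "\<exists>u\<in>B. reach G (2^(k-1) - 2^m) u b"
  shows "depOK G k A B m (fA(x:=a)) (fB(x:=b)) (insert x P)"
  unfolding depOK_def
proof (intro ballI)
  fix j assume j: "j \<in> insert x P"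
  show "(\<exists>u\<in>A. reach G (2^(k-1) - 2^m) u ((fA(x:=a)) j)) \<and> (\<exists>u\<in>B. reach G (2^(k-1) - 2^m) u ((fB(x:=b)) j))"
  proof (cases "j = x")
    case True then show ?thesis using assms(3,4) by simp
  next
    case False
    then have "j \<in> P" using j by blast
    with assms(1) have "(\<exists>u\<in>A. reach G (2^(k-1) - 2^m) u (fA j)) \<and> (\<exists>u\<in>B. reach G (2^(k-1) - 2^m) u (fB j))"
      unfolding depOK_def by (rule bspec)
    then show ?thesis using False by simp
  qed
qed

lemma sat_map_Some: "sat (expand G A) \<nu> (map_fm Some \<phi>) = sat G \<nu> \<phi>"
  by (induction \<phi> arbitrary: \<nu>) (auto simp: expand_def)

lemma sat_ex_in_new: "sat (expand G A) \<nu> (ex_in_new n \<phi>) \<longleftrightarrow> (\<exists>a\<in>verts G. a \<in> A \<and> sat G (\<nu>(n:=a)) \<phi>)"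
  unfolding ex_in_new_def by (simp add: sat_map_Some) (simp add: expand_def)


context gsetup
begin

lemma dep_in:
  assumes "depOK G k A B m fA fB P" "j \<in> P"
  shows "fA j \<in> nbhd G (2^(k-1) - 1) A" "fB j \<in> nbhd G (2^(k-1) - 1) B"
proof -
  have h: "(\<exists>u\<in>A. reach G (2^(k-1) - 2^m) u (fA j)) \<and> (\<exists>u\<in>B. reach G (2^(k-1) - 2^m) u (fB j))"
    using assms unfolding depOK_def by (rule bspec)
  obtain u where u: "u \<in> A" "reach G (2^(k-1) - 2^m) u (fA j)" using h by blast
  have "reach G (2^(k-1) - 1) u (fA j)" using reach_mono[OF u(2) pow_r] .
  moreover have "fA j \<in> verts G" using reach_verts[OF u(2)] by simp
  ultimately show "fA j \<in> nbhd G (2^(k-1) - 1) A" unfolding nbhd_iff using u(1) by blast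
  obtain v where v: "v \<in> B" "reach G (2^(k-1) - 2^m) v (fB j)" using h by blast
  have "reach G (2^(k-1) - 1) v (fB j)" using reach_mono[OF v(2) pow_r] .
  moreover have "fB j \<in> verts G" using reach_verts[OF v(2)] by simp
  ultimately show "fB j \<in> nbhd G (2^(k-1) - 1) B" unfolding nbhd_iff using v(1) by blast
qed

lemma nbhd_verts: "x \<in> nbhd G t S \<Longrightarrow> x \<in> verts G"
  unfolding nbhd_iff by simp

lemma Inv_atoms:
  assumes inv: "Inv G k A B m nL nR Vi Vab Vba" and i: "i \<in> Vi \<union> Vab \<union> Vba" and j: "j \<in> Vi \<union> Vab \<union> Vba"
  shows "(nL i = nL j \<longleftrightarrow> nR i = nR j) \<and> (adj G (nL i) (nL j) \<longleftrightarrow> adj G (nR i) (nR j))"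
proof -
  define fA where "fA = muA Vab nL nR"
  define fB where "fB = muB Vab nL nR"
  let ?P = "Vab \<union> Vba"
  let ?NA = "nbhd G (2^(k-1) - 1) A"
  let ?NB = "nbhd G (2^(k-1) - 1) B"
  have d: "Vi \<inter> Vab = {}" "Vi \<inter> Vba = {}" "Vab \<inter> Vba = {}" "m < k" using InvD(1-4)[OF inv] .
  have ids: "idsOK G (A \<union> B) m nL nR fA fB Vi ?P" using InvD(5)[OF inv] unfolding fA_def fB_def .
  have dep: "depOK G k A B m fA fB ?P" using InvD(6)[OF inv] unfolding fA_def fB_def .
  have e: "efg m (LL G k A) fA (LL G k B) fB ?P" using InvD(7)[OF inv] unfolding fA_def fB_def .
  have inA: "\<And>j. j \<in> ?P \<Longrightarrow> fA j \<in> ?NA" using dep_in(1)[OF dep] .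
  have inB: "\<And>j. j \<in> ?P \<Longrightarrow> fB j \<in> ?NB" using dep_in(2)[OF dep] .
  have pat: "patom (LL G k A) fA (LL G k B) fB ?P" using efg_patom[OF e] .
  have pateq: "\<And>i j. i \<in> ?P \<Longrightarrow> j \<in> ?P \<Longrightarrow> (fA i = fA j \<longleftrightarrow> fB i = fB j)"
    using pat unfolding patom_def by blast
  have patadj: "\<And>i j. i \<in> ?P \<Longrightarrow> j \<in> ?P \<Longrightarrow> (adj G (fA i) (fA j) \<longleftrightarrow> adj G (fB i) (fB j))"
  proof -
    fix i j assume ij: "i \<in> ?P" "j \<in> ?P"
    have "adj (LL G k A) (fA i) (fA j) \<longleftrightarrow> adj (LL G k B) (fB i) (fB j)"
      using pat ij unfolding patom_def by blast
    then show "adj G (fA i) (fA j) \<longleftrightarrow> adj G (fB i) (fB j)"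
      unfolding LL_adj using inA[OF ij(1)] inA[OF ij(2)] inB[OF ij(1)] inB[OF ij(2)] by simp
  qed
  have sepf: "\<And>i j. i \<in> ?P \<Longrightarrow> j \<in> ?P \<Longrightarrow> fA i \<noteq> fB j \<and> \<not> adj G (fA i) (fB j) \<and> \<not> adj G (fB j) (fA i)"
    using sep inA inB by blast
  have idf: "\<And>i j. i \<in> Vi \<Longrightarrow> j \<in> ?P \<Longrightarrow> nR i = nL i \<and>
      (fA j \<noteq> nL i \<and> \<not> adj G (fA j) (nL i) \<and> \<not> adj G (nL i) (fA j)) \<and>
      (fB j \<noteq> nL i \<and> \<not> adj G (fB j) (nL i) \<and> \<not> adj G (nL i) (fB j))"
  proof -
    fix i j assume ij: "i \<in> Vi" "j \<in> ?P"
    have h: "nL i = nR i \<and> nL i \<in> verts G \<and> (\<forall>u\<in>A \<union> B. \<not> reach G (2^m - 1) u (nL i)) \<and>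
        (\<forall>j\<in>?P. \<not> reach G (2^m) (fA j) (nL i) \<and> \<not> reach G (2^m) (fB j) (nL i))"
      using ids ij(1) unfolding idsOK_def by (rule bspec)
    have h1: "nL i = nR i" using h by (rule conjunct1)
    have hv: "nL i \<in> verts G" using h[THEN conjunct2, THEN conjunct1] .
    have hP: "\<forall>j\<in>?P. \<not> reach G (2^m) (fA j) (nL i) \<and> \<not> reach G (2^m) (fB j) (nL i)"
      using h[THEN conjunct2, THEN conjunct2, THEN conjunct2] .
    have hj: "\<not> reach G (2^m) (fA j) (nL i) \<and> \<not> reach G (2^m) (fB j) (nL i)" using hP ij(2) by (rule bspec)
    have n1: "fA j \<noteq> nL i \<and> \<not> adj G (fA j) (nL i) \<and> \<not> adj G (nL i) (fA j)"
      using near_lemma[OF hj[THEN conjunct1] nbhd_verts[OF inA[OF ij(2)]] hv symG] .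
    have n2: "fB j \<noteq> nL i \<and> \<not> adj G (fB j) (nL i) \<and> \<not> adj G (nL i) (fB j)"
      using near_lemma[OF hj[THEN conjunct2] nbhd_verts[OF inB[OF ij(2)]] hv symG] .
    show "nR i = nL i \<and> (fA j \<noteq> nL i \<and> \<not> adj G (fA j) (nL i) \<and> \<not> adj G (nL i) (fA j)) \<and>
      (fB j \<noteq> nL i \<and> \<not> adj G (fB j) (nL i) \<and> \<not> adj G (nL i) (fB j))"
      using h1 n1 n2 by simp
  qed
  have cab: "\<And>j. j \<in> Vab \<Longrightarrow> nL j = fA j \<and> nR j = fB j" unfolding fA_def fB_def muA_def muB_def by simp
  have cba: "\<And>j. j \<in> Vba \<Longrightarrow> nL j = fB j \<and> nR j = fA j"
  proof -
    fix j assume "j \<in> Vba"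
    then have "j \<notin> Vab" using d(3) by blast
    then show "nL j = fB j \<and> nR j = fA j" unfolding fA_def fB_def muA_def muB_def by simp
  qed
  have Pab: "\<And>j. j \<in> Vab \<Longrightarrow> j \<in> ?P" by blast
  have Pba: "\<And>j. j \<in> Vba \<Longrightarrow> j \<in> ?P" by blast
  have ci: "i \<in> Vi \<or> i \<in> Vab \<or> i \<in> Vba" using i by blast
  have cj: "j \<in> Vi \<or> j \<in> Vab \<or> j \<in> Vba" using j by blast
  have idsame: "\<And>i. i \<in> Vi \<Longrightarrow> nR i = nL i"
  proof -
    fix i assume i: "i \<in> Vi"
    have h: "nL i = nR i \<and> nL i \<in> verts G \<and> (\<forall>u\<in>A \<union> B. \<not> reach G (2^m - 1) u (nL i)) \<and>
        (\<forall>j\<in>?P. \<not> reach G (2^m) (fA j) (nL i) \<and> \<not> reach G (2^m) (fB j) (nL i))"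
      using ids i unfolding idsOK_def by (rule bspec)
    then show "nR i = nL i" by simp
  qed
  let ?G = "(nL i = nL j \<longleftrightarrow> nR i = nR j) \<and> (adj G (nL i) (nL j) \<longleftrightarrow> adj G (nR i) (nR j))"
  have c11: "i \<in> Vi \<Longrightarrow> j \<in> Vi \<Longrightarrow> ?G" using idsame by simp
  have c12: "i \<in> Vi \<Longrightarrow> j \<in> Vab \<Longrightarrow> ?G"
  proof -
    assume a1: "i \<in> Vi" and a2: "j \<in> Vab"
    show ?G using idf[OF a1 Pab[OF a2]] cab[OF a2] by auto
  qed
  have c13: "i \<in> Vi \<Longrightarrow> j \<in> Vba \<Longrightarrow> ?G"
  proof -
    assume a1: "i \<in> Vi" and a2: "j \<in> Vba"
    show ?G using idf[OF a1 Pba[OF a2]] cba[OF a2] by auto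
  qed
  have c21: "i \<in> Vab \<Longrightarrow> j \<in> Vi \<Longrightarrow> ?G"
  proof -
    assume a1: "i \<in> Vab" and a2: "j \<in> Vi"
    show ?G using idf[OF a2 Pab[OF a1]] cab[OF a1] by auto
  qed
  have c31: "i \<in> Vba \<Longrightarrow> j \<in> Vi \<Longrightarrow> ?G"
  proof -
    assume a1: "i \<in> Vba" and a2: "j \<in> Vi"
    show ?G using idf[OF a2 Pba[OF a1]] cba[OF a1] by auto
  qed
  have c22: "i \<in> Vab \<Longrightarrow> j \<in> Vab \<Longrightarrow> ?G"
  proof -
    assume a1: "i \<in> Vab" and a2: "j \<in> Vab"
    show ?G using pateq[OF Pab[OF a1] Pab[OF a2]] patadj[OF Pab[OF a1] Pab[OF a2]] cab[OF a1] cab[OF a2] by simp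
  qed
  have c33: "i \<in> Vba \<Longrightarrow> j \<in> Vba \<Longrightarrow> ?G"
  proof -
    assume a1: "i \<in> Vba" and a2: "j \<in> Vba"
    show ?G using pateq[OF Pba[OF a1] Pba[OF a2]] patadj[OF Pba[OF a1] Pba[OF a2]] cba[OF a1] cba[OF a2] by simp
  qed
  have c23: "i \<in> Vab \<Longrightarrow> j \<in> Vba \<Longrightarrow> ?G"
  proof -
    assume a1: "i \<in> Vab" and a2: "j \<in> Vba"
    show ?G using sepf[OF Pab[OF a1] Pba[OF a2]] sepf[OF Pba[OF a2] Pab[OF a1]] cab[OF a1] cba[OF a2] by auto
  qed
  have c32: "i \<in> Vba \<Longrightarrow> j \<in> Vab \<Longrightarrow> ?G"
  proof -
    assume a1: "i \<in> Vba" and a2: "j \<in> Vab"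
    show ?G using sepf[OF Pba[OF a1] Pab[OF a2]] sepf[OF Pab[OF a2] Pba[OF a1]] cba[OF a1] cab[OF a2] by auto
  qed
  show ?thesis using ci cj c11 c12 c13 c21 c22 c23 c31 c32 c33 by blast
qed

lemma Inv_col:
  assumes inv: "Inv G k A B m nL nR Vi Vab Vba" and i: "i \<in> Vi \<union> Vab \<union> Vba"
  shows "nL i \<in> colr G c \<longleftrightarrow> nR i \<in> colr G c"
proof -
  define fA where "fA = muA Vab nL nR"
  define fB where "fB = muB Vab nL nR"
  let ?P = "Vab \<union> Vba"
  have d: "Vi \<inter> Vab = {}" "Vi \<inter> Vba = {}" "Vab \<inter> Vba = {}" "m < k" using InvD(1-4)[OF inv] .
  have ids: "idsOK G (A \<union> B) m nL nR fA fB Vi ?P" using InvD(5)[OF inv] unfolding fA_def fB_def .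
  have dep: "depOK G k A B m fA fB ?P" using InvD(6)[OF inv] unfolding fA_def fB_def .
  have e: "efg m (LL G k A) fA (LL G k B) fB ?P" using InvD(7)[OF inv] unfolding fA_def fB_def .
  have pat: "patom (LL G k A) fA (LL G k B) fB ?P" using efg_patom[OF e] .
  have pc: "\<And>i. i \<in> ?P \<Longrightarrow> (fA i \<in> colr G c \<longleftrightarrow> fB i \<in> colr G c)"
  proof -
    fix i assume ii: "i \<in> ?P"
    have "fA i \<in> colr (LL G k A) (Some c) \<longleftrightarrow> fB i \<in> colr (LL G k B) (Some c)"
      using pat ii unfolding patom_def by blast
    then show "fA i \<in> colr G c \<longleftrightarrow> fB i \<in> colr G c"
      unfolding LL_colS using dep_in[OF dep ii] by simp
  qed
  consider "i \<in> Vi" | "i \<in> Vab" | "i \<in> Vba" using i by blast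
  then show ?thesis
  proof cases
    case 1
    have h: "nL i = nR i \<and> nL i \<in> verts G \<and> (\<forall>u\<in>A \<union> B. \<not> reach G (2^m - 1) u (nL i)) \<and>
        (\<forall>j\<in>?P. \<not> reach G (2^m) (fA j) (nL i) \<and> \<not> reach G (2^m) (fB j) (nL i))"
      using ids 1 unfolding idsOK_def by (rule bspec)
    then have "nL i = nR i" by (rule conjunct1)
    then show ?thesis by simp
  next
    case 2
    then have "nL i = fA i" "nR i = fB i" unfolding fA_def fB_def muA_def muB_def by simp_all
    then show ?thesis using pc 2 by simp
  next
    case 3
    then have "i \<notin> Vab" using d(3) by blast
    then have "nL i = fB i" "nR i = fA i" unfolding fA_def fB_def muA_def muB_def by simp_all
    then show ?thesis using pc 3 by auto
  qed
qed

lemma step_C1: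
  assumes inv: "Inv G k A B (Suc m) nL nR Vi Vab Vba" and x: "x \<notin> Vi \<union> Vab \<union> Vba" and a: "a \<in> verts G"
    and c1: "(\<exists>u\<in>A. reach G (2^m - 1) u a) \<or> (\<exists>j\<in>Vab \<union> Vba. reach G (2^m) (muA Vab nL nR j) a)"
  shows "\<exists>b\<in>verts G. Inv G k A B m (nL(x:=a)) (nR(x:=b)) Vi (insert x Vab) Vba"
proof -
  define fA where "fA = muA Vab nL nR"
  define fB where "fB = muB Vab nL nR"
  let ?P = "Vab \<union> Vba"
  let ?r = "2^(k-1) - 1 :: nat"
  let ?Dm = "2^(k-1) - 2^m :: nat"
  let ?Ds = "2^(k-1) - 2^Suc m :: nat"
  have d: "Vi \<inter> Vab = {}" "Vi \<inter> Vba = {}" "Vab \<inter> Vba = {}" "Suc m < k" using InvD(1-4)[OF inv] .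
  have ids: "idsOK G (A \<union> B) (Suc m) nL nR fA fB Vi ?P" using InvD(5)[OF inv] unfolding fA_def fB_def .
  have dep: "depOK G k A B (Suc m) fA fB ?P" using InvD(6)[OF inv] unfolding fA_def fB_def .
  have e0: "efg (Suc m) (LL G k A) fA (LL G k B) fB ?P" using InvD(7)[OF inv] unfolding fA_def fB_def .
  have c1': "(\<exists>u\<in>A. reach G (2^m - 1) u a) \<or> (\<exists>j\<in>?P. reach G (2^m) (fA j) a)" using c1 unfolding fA_def .
  have pf: "?Ds + 2^m = ?Dm" "2^m - 1 \<le> ?Dm" "?Ds \<le> ?Dm" using pow_facts[OF d(4)] by simp_all
  have pr: "?Dm \<le> ?r" by (rule pow_r)
  have xP: "x \<notin> ?P" "x \<notin> Vi" using x by blast+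
  have depA: "\<And>j. j \<in> ?P \<Longrightarrow> \<exists>u\<in>A. reach G ?Ds u (fA j)"
  proof -
    fix j assume "j \<in> ?P"
    with dep have "(\<exists>u\<in>A. reach G ?Ds u (fA j)) \<and> (\<exists>u\<in>B. reach G ?Ds u (fB j))" unfolding depOK_def by (rule bspec)
    then show "\<exists>u\<in>A. reach G ?Ds u (fA j)" by (rule conjunct1)
  qed
  have depB: "\<And>j. j \<in> ?P \<Longrightarrow> \<exists>u\<in>B. reach G ?Ds u (fB j)"
  proof -
    fix j assume "j \<in> ?P"
    with dep have "(\<exists>u\<in>A. reach G ?Ds u (fA j)) \<and> (\<exists>u\<in>B. reach G ?Ds u (fB j))" unfolding depOK_def by (rule bspec)
    then show "\<exists>u\<in>B. reach G ?Ds u (fB j)" by (rule conjunct2)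
  qed
  have inB: "\<And>j. j \<in> ?P \<Longrightarrow> fB j \<in> nbhd G ?r B" using dep_in(2)[OF dep] .
  have adep: "\<exists>u\<in>A. reach G ?Dm u a"
    and alift: "(\<exists>u\<in>colr (LL G k A) None. reach (LL G k A) (2^m - 1) u a) \<or> (\<exists>j\<in>?P. reach (LL G k A) (2^m) (fA j) a)"
  proof -
    have "(\<exists>u\<in>A. reach G ?Dm u a) \<and> ((\<exists>u\<in>colr (LL G k A) None. reach (LL G k A) (2^m - 1) u a) \<or> (\<exists>j\<in>?P. reach (LL G k A) (2^m) (fA j) a))"
      using c1'
    proof
      assume "\<exists>u\<in>A. reach G (2^m - 1) u a"
      then obtain u where u: "u \<in> A" "reach G (2^m - 1) u a" by blast
      have uv: "u \<in> verts G" using reach_verts[OF u(2)] by simp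
      have r1: "reach G ?Dm u a" using reach_mono[OF u(2) pf(2)] .
      have "0 + (2^m - 1) \<le> ?r" using pf(2) pr by linarith
      then have r2: "reach (LL G k A) (2^m - 1) u a" by (rule lift[OF u(2) u(1) reach_refl[OF uv, where t=0]])
      have "reach G ?r u u" using reach_refl[OF uv] .
      then have "u \<in> nbhd G ?r A" unfolding nbhd_iff using uv u(1) by blast
      then have "u \<in> colr (LL G k A) None" unfolding LL_colN using u(1) by blast
      then show ?thesis using r1 r2 u(1) by blast
    next
      assume "\<exists>j\<in>?P. reach G (2^m) (fA j) a"
      then obtain j where j: "j \<in> ?P" "reach G (2^m) (fA j) a" by blast
      obtain u where u: "u \<in> A" "reach G ?Ds u (fA j)" using depA[OF j(1)] by blast
      have "reach G (?Ds + 2^m) u a" using reach_trans[OF u(2) j(2)] .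
      then have r1: "reach G ?Dm u a" using pf(1) by simp
      have "?Ds + 2^m \<le> ?r" using pf(1) pr by linarith
      then have r2: "reach (LL G k A) (2^m) (fA j) a" using lift[OF j(2) u(1) u(2)] by simp
      show ?thesis using r1 r2 u(1) j(1) by blast
    qed
    then show "\<exists>u\<in>A. reach G ?Dm u a"
      "(\<exists>u\<in>colr (LL G k A) None. reach (LL G k A) (2^m - 1) u a) \<or> (\<exists>j\<in>?P. reach (LL G k A) (2^m) (fA j) a)"
      by simp_all
  qed
  have aN: "a \<in> nbhd G ?r A"
  proof -
    obtain u where u: "u \<in> A" "reach G ?Dm u a" using adep by blast
    have "reach G ?r u a" using reach_mono[OF u(2) pr] .
    then show ?thesis unfolding nbhd_iff using a u(1) by blast
  qed
  have aL: "a \<in> verts (LL G k A)" using aN by (simp add: LL_verts)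
  obtain b where b: "b \<in> verts (LL G k B)" and Eb: "efg m (LL G k A) (fA(x:=a)) (LL G k B) (fB(x:=b)) (insert x ?P)"
    using efg_forth[OF e0 aL, of x] by blast
  have bN: "b \<in> nbhd G ?r B" using b by (simp add: LL_verts)
  have bG: "b \<in> verts G" using nbhd_verts[OF bN] .
  have vs: "(fB(x:=b)) ` insert x ?P \<subseteq> verts (LL G k B)"
  proof
    fix y assume "y \<in> (fB(x:=b)) ` insert x ?P"
    then obtain j where j: "j \<in> insert x ?P" "y = (fB(x:=b)) j" by blast
    show "y \<in> verts (LL G k B)"
    proof (cases "j = x")
      case True then show ?thesis using j b by simp
    next
      case False
      then have "j \<in> ?P" using j by blast
      then show ?thesis using j False inB by (simp add: LL_verts)
    qed
  qed
  have wb: "(\<exists>u\<in>B. reach G (2^m - 1) u b) \<or> (\<exists>j\<in>?P. reach G (2^m) (fB j) b)"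
    using alift
  proof
    assume "\<exists>u\<in>colr (LL G k A) None. reach (LL G k A) (2^m - 1) u a"
    then obtain u where u: "u \<in> colr (LL G k A) None" "reach (LL G k A) (2^m - 1) u a" by blast
    have r: "reach (LL G k A) (2^m - 1) u ((fA(x:=a)) x)" using u(2) by simp
    obtain u' where u': "u' \<in> colr (LL G k B) None" "reach (LL G k B) (2^m - 1) u' ((fB(x:=b)) x)"
      using efg_dist_col[OF Eb insertI1 vs u(1) r] by blast
    have "u' \<in> B" using u'(1) unfolding LL_colN by blast
    moreover have "reach G (2^m - 1) u' b" using reach_LL[OF u'(2)] by simp
    ultimately show ?thesis by blast
  next
    assume "\<exists>j\<in>?P. reach (LL G k A) (2^m) (fA j) a"
    then obtain j where j: "j \<in> ?P" "reach (LL G k A) (2^m) (fA j) a" by blast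
    have jx: "j \<noteq> x" using j(1) xP(1) by blast
    have r: "reach (LL G k A) (2^m) ((fA(x:=a)) j) ((fA(x:=a)) x)" using j(2) jx by simp
    have jI: "j \<in> insert x ?P" using j(1) by blast
    have "reach (LL G k B) (2^m) ((fB(x:=b)) j) ((fB(x:=b)) x)" using efg_dist[OF Eb jI insertI1 vs r] .
    then have "reach G (2^m) (fB j) b" using reach_LL jx by fastforce
    then show ?thesis using j(1) by blast
  qed
  have bdep: "\<exists>u\<in>B. reach G ?Dm u b"
    using wb
  proof
    assume "\<exists>u\<in>B. reach G (2^m - 1) u b"
    then obtain u where u: "u \<in> B" "reach G (2^m - 1) u b" by blast
    show ?thesis using u(1) reach_mono[OF u(2) pf(2)] by blast
  next
    assume "\<exists>j\<in>?P. reach G (2^m) (fB j) b"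
    then obtain j where j: "j \<in> ?P" "reach G (2^m) (fB j) b" by blast
    obtain u where u: "u \<in> B" "reach G ?Ds u (fB j)" using depB[OF j(1)] by blast
    have "reach G (?Ds + 2^m) u b" using reach_trans[OF u(2) j(2)] .
    then have "reach G ?Dm u b" using pf(1) by simp
    then show ?thesis using u(1) by blast
  qed
  have fa: "muA (insert x Vab) (nL(x:=a)) (nR(x:=b)) = fA(x:=a)" unfolding fA_def by (rule muA_ins)
  have fb: "muB (insert x Vab) (nL(x:=a)) (nR(x:=b)) = fB(x:=b)" unfolding fB_def by (rule muB_ins)
  have PP: "insert x Vab \<union> Vba = insert x ?P" by blast
  have farall: "\<forall>i\<in>Vi. \<not> reach G (2^m) a (nL i) \<and> \<not> reach G (2^m) b (nL i)"
  proof
    fix i assume i: "i \<in> Vi"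
    have "(\<exists>u\<in>A \<union> B. reach G (2^m - 1) u a) \<or> (\<exists>j\<in>?P. reach G (2^m) (fA j) a) \<or> (\<exists>j\<in>?P. reach G (2^m) (fB j) a)"
      using c1' by blast
    then have n1: "\<not> reach G (2^m) a (nL i)" by (rule ids_far[OF ids i])
    have "(\<exists>u\<in>A \<union> B. reach G (2^m - 1) u b) \<or> (\<exists>j\<in>?P. reach G (2^m) (fA j) b) \<or> (\<exists>j\<in>?P. reach G (2^m) (fB j) b)"
      using wb by blast
    then have n2: "\<not> reach G (2^m) b (nL i)" by (rule ids_far[OF ids i])
    show "\<not> reach G (2^m) a (nL i) \<and> \<not> reach G (2^m) b (nL i)" using n1 n2 by simp
  qed
  have ids': "idsOK G (A \<union> B) m (nL(x:=a)) (nR(x:=b)) (fA(x:=a)) (fB(x:=b)) Vi (insert x ?P)"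
    by (rule idsOK_ins_peb[OF idsOK_Suc[OF ids] xP(2) xP(1) farall])
  have dep1: "depOK G k A B m fA fB ?P"
    by (rule depOK_gen[OF dep]) (use d(4) in auto)
  have dep': "depOK G k A B m (fA(x:=a)) (fB(x:=b)) (insert x ?P)"
    by (rule depOK_ins[OF dep1 xP(1) adep bdep])
  have inv': "Inv G k A B m (nL(x:=a)) (nR(x:=b)) Vi (insert x Vab) Vba"
  proof (rule InvI)
    show "Vi \<inter> insert x Vab = {}" using d(1) xP(2) by blast
    show "Vi \<inter> Vba = {}" by (rule d(2))
    show "insert x Vab \<inter> Vba = {}" using d(3) xP(1) by blast
    show "m < k" using d(4) by simp
    show "idsOK G (A \<union> B) m (nL(x:=a)) (nR(x:=b)) (muA (insert x Vab) (nL(x:=a)) (nR(x:=b)))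
      (muB (insert x Vab) (nL(x:=a)) (nR(x:=b))) Vi (insert x Vab \<union> Vba)"
      unfolding fa fb PP by (rule ids')
    show "depOK G k A B m (muA (insert x Vab) (nL(x:=a)) (nR(x:=b))) (muB (insert x Vab) (nL(x:=a)) (nR(x:=b))) (insert x Vab \<union> Vba)"
      unfolding fa fb PP by (rule dep')
    show "efg m (LL G k A) (muA (insert x Vab) (nL(x:=a)) (nR(x:=b))) (LL G k B) (muB (insert x Vab) (nL(x:=a)) (nR(x:=b))) (insert x Vab \<union> Vba)"
      unfolding fa fb PP by (rule Eb)
  qed
  show ?thesis using inv' bG by blast
qed


lemma step_C3:
  assumes inv: "Inv G k A B (Suc m) nL nR Vi Vab Vba" and x: "x \<notin> Vi \<union> Vab \<union> Vba" and a: "a \<in> verts G"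
    and nc1: "\<forall>u\<in>A \<union> B. \<not> reach G (2^m - 1) u a"
    and nc2: "\<forall>j\<in>Vab \<union> Vba. \<not> reach G (2^m) (muA Vab nL nR j) a \<and> \<not> reach G (2^m) (muB Vab nL nR j) a"
  shows "Inv G k A B m (nL(x:=a)) (nR(x:=a)) (insert x Vi) Vab Vba"
proof -
  define fA where "fA = muA Vab nL nR"
  define fB where "fB = muB Vab nL nR"
  let ?P = "Vab \<union> Vba"
  have d: "Vi \<inter> Vab = {}" "Vi \<inter> Vba = {}" "Vab \<inter> Vba = {}" "Suc m < k" using InvD(1-4)[OF inv] .
  have ids: "idsOK G (A \<union> B) (Suc m) nL nR fA fB Vi ?P" using InvD(5)[OF inv] unfolding fA_def fB_def .
  have dep: "depOK G k A B (Suc m) fA fB ?P" using InvD(6)[OF inv] unfolding fA_def fB_def .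
  have e0: "efg (Suc m) (LL G k A) fA (LL G k B) fB ?P" using InvD(7)[OF inv] unfolding fA_def fB_def .
  have xP: "x \<notin> ?P" "x \<notin> Vi" "x \<notin> Vab" using x by blast+
  have nc2': "\<forall>j\<in>?P. \<not> reach G (2^m) (fA j) a \<and> \<not> reach G (2^m) (fB j) a" using nc2 unfolding fA_def fB_def .
  have fa: "muA Vab (nL(x:=a)) (nR(x:=a)) = fA(x:=a)" unfolding fA_def by (rule muA_out[OF xP(3)])
  have fb: "muB Vab (nL(x:=a)) (nR(x:=a)) = fB(x:=a)" unfolding fB_def by (rule muB_out[OF xP(3)])
  have ag: "\<forall>j\<in>?P. j \<in> ?P \<and> (fA(x:=a)) j = fA j \<and> (fB(x:=a)) j = fB j" using xP(1) by auto
  have ag2: "\<forall>j\<in>?P. (fA(x:=a)) j = fA j \<and> (fB(x:=a)) j = fB j" using xP(1) by auto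
  have ids': "idsOK G (A \<union> B) m (nL(x:=a)) (nR(x:=a)) (fA(x:=a)) (fB(x:=a)) (insert x Vi) ?P"
    by (rule idsOK_ins_id[OF idsOK_Suc[OF ids] xP(1) a nc1 nc2'])
  have dep': "depOK G k A B m (fA(x:=a)) (fB(x:=a)) ?P"
    by (rule depOK_gen[OF dep ag]) (use d(4) in auto)
  have e': "efg m (LL G k A) (fA(x:=a)) (LL G k B) (fB(x:=a)) ?P"
    by (rule efg_cong[OF efg_Suc_mono[OF e0] ag2]) simp
  show ?thesis
  proof (rule InvI)
    show "insert x Vi \<inter> Vab = {}" using d(1) xP by blast
    show "insert x Vi \<inter> Vba = {}" using d(2) xP by blast
    show "Vab \<inter> Vba = {}" by (rule d(3))
    show "m < k" using d(4) by simp
    show "idsOK G (A \<union> B) m (nL(x:=a)) (nR(x:=a)) (muA Vab (nL(x:=a)) (nR(x:=a)))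
      (muB Vab (nL(x:=a)) (nR(x:=a))) (insert x Vi) (Vab \<union> Vba)"
      unfolding fa fb by (rule ids')
    show "depOK G k A B m (muA Vab (nL(x:=a)) (nR(x:=a))) (muB Vab (nL(x:=a)) (nR(x:=a))) (Vab \<union> Vba)"
      unfolding fa fb by (rule dep')
    show "efg m (LL G k A) (muA Vab (nL(x:=a)) (nR(x:=a))) (LL G k B) (muB Vab (nL(x:=a)) (nR(x:=a))) (Vab \<union> Vba)"
      unfolding fa fb by (rule e')
  qed
qed

lemma step:
  assumes inv: "Inv G k A B (Suc m) nL nR Vi Vab Vba" and x: "x \<notin> Vi \<union> Vab \<union> Vba" and a: "a \<in> verts G"
  shows "\<exists>b\<in>verts G. \<exists>Vi' Vab' Vba'. Inv G k A B m (nL(x:=a)) (nR(x:=b)) Vi' Vab' Vba' \<and>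
     Vi' \<union> Vab' \<union> Vba' = insert x (Vi \<union> Vab \<union> Vba)"
proof -
  let ?P = "Vab \<union> Vba"
  have d: "Vab \<inter> Vba = {}" using InvD(3)[OF inv] .
  consider (c1) "(\<exists>u\<in>A. reach G (2^m - 1) u a) \<or> (\<exists>j\<in>?P. reach G (2^m) (muA Vab nL nR j) a)"
    | (c2) "(\<exists>u\<in>B. reach G (2^m - 1) u a) \<or> (\<exists>j\<in>?P. reach G (2^m) (muB Vab nL nR j) a)"
    | (c3) "\<forall>u\<in>A \<union> B. \<not> reach G (2^m - 1) u a"
      "\<forall>j\<in>?P. \<not> reach G (2^m) (muA Vab nL nR j) a \<and> \<not> reach G (2^m) (muB Vab nL nR j) a"
    by blast
  then show ?thesis
  proof cases
    case c1
    obtain b where b: "b \<in> verts G" "Inv G k A B m (nL(x:=a)) (nR(x:=b)) Vi (insert x Vab) Vba"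
      using step_C1[OF inv x a c1] by blast
    have "Vi \<union> insert x Vab \<union> Vba = insert x (Vi \<union> Vab \<union> Vba)" by blast
    then show ?thesis using b by blast
  next
    case c2
    have invr: "Inv G k B A (Suc m) nL nR Vi Vba Vab" by (rule Inv_relabel[OF inv])
    have xr: "x \<notin> Vi \<union> Vba \<union> Vab" using x by blast
    have ag: "\<forall>j\<in>Vba \<union> Vab. muA Vba nL nR j = muB Vab nL nR j"
      using mu_relabel(1)[OF d] by blast
    have c1r: "(\<exists>u\<in>B. reach G (2^m - 1) u a) \<or> (\<exists>j\<in>Vba \<union> Vab. reach G (2^m) (muA Vba nL nR j) a)"
      using c2 ag by (metis Un_commute)
    obtain b where b: "b \<in> verts G" "Inv G k B A m (nL(x:=a)) (nR(x:=b)) Vi (insert x Vba) Vab"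
      using gsetup.step_C1[OF swap invr xr a c1r] by blast
    have b2: "Inv G k A B m (nL(x:=a)) (nR(x:=b)) Vi Vab (insert x Vba)" by (rule Inv_relabel[OF b(2)])
    have "Vi \<union> Vab \<union> insert x Vba = insert x (Vi \<union> Vab \<union> Vba)" by blast
    then show ?thesis using b(1) b2 by blast
  next
    case c3
    have i: "Inv G k A B m (nL(x:=a)) (nR(x:=a)) (insert x Vi) Vab Vba" by (rule step_C3[OF inv x a c3])
    have "insert x Vi \<union> Vab \<union> Vba = insert x (Vi \<union> Vab \<union> Vba)" by blast
    then show ?thesis using i a by blast
  qed
qed


end


lemma main:
  "gsetup G k A B \<Longrightarrow> Inv G k A B m nL nR Vi Vab Vba \<Longrightarrow> fv \<phi> \<subseteq> Vi \<union> Vab \<union> Vba \<Longrightarrow> qr \<phi> \<le> m \<Longrightarrow>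
   sat G nL \<phi> = sat G nR \<phi>"
proof (induction \<phi> arbitrary: A B m nL nR Vi Vab Vba)
  case (Eq x y)
  then show ?case using gsetup.Inv_atoms[OF Eq(1) Eq(2), of x y] by simp
next
  case (Adj x y)
  then show ?case using gsetup.Inv_atoms[OF Adj(1) Adj(2), of x y] by simp
next
  case (Col c x)
  then show ?case using gsetup.Inv_col[OF Col(1) Col(2), of x c] by simp
next
  case (Neg \<psi>)
  have "sat G nL \<psi> = sat G nR \<psi>" using Neg.IH[OF Neg.prems(1,2)] Neg.prems(3,4) by simp
  then show ?case by simp
next
  case (Conj \<psi>1 \<psi>2)
  have "sat G nL \<psi>1 = sat G nR \<psi>1" using Conj.IH(1)[OF Conj.prems(1,2)] Conj.prems(3,4) by simp
  moreover have "sat G nL \<psi>2 = sat G nR \<psi>2" using Conj.IH(2)[OF Conj.prems(1,2)] Conj.prems(3,4) by simp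
  ultimately show ?case by simp
next
  case (Ex x \<psi>)
  obtain m' where m: "m = Suc m'" using Ex.prems(4) by (cases m) auto
  have q: "qr \<psi> \<le> m'" using Ex.prems(4) m by simp
  have gs: "gsetup G k A B" by (rule Ex.prems(1))
  have inv: "Inv G k A B (Suc m') nL nR (Vi - {x}) (Vab - {x}) (Vba - {x})"
    using Inv_remove[OF Ex.prems(2)] m by simp
  have xn: "x \<notin> (Vi - {x}) \<union> (Vab - {x}) \<union> (Vba - {x})" by blast
  have fvs: "\<And>S. S = insert x ((Vi - {x}) \<union> (Vab - {x}) \<union> (Vba - {x})) \<Longrightarrow> fv \<psi> \<subseteq> S"
    using Ex.prems(3) by auto
  show ?case
  proof
    assume "sat G nL (Ex x \<psi>)"
    then obtain a where a: "a \<in> verts G" "sat G (nL(x:=a)) \<psi>" by auto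
    obtain b Vi' Vab' Vba' where b: "b \<in> verts G" "Inv G k A B m' (nL(x:=a)) (nR(x:=b)) Vi' Vab' Vba'"
      "Vi' \<union> Vab' \<union> Vba' = insert x ((Vi - {x}) \<union> (Vab - {x}) \<union> (Vba - {x}))"
      using gsetup.step[OF gs inv xn a(1)] by blast
    have "sat G (nL(x:=a)) \<psi> = sat G (nR(x:=b)) \<psi>"
      by (rule Ex.IH[OF gs b(2) fvs[OF b(3)] q])
    then show "sat G nR (Ex x \<psi>)" using a(2) b(1) by auto
  next
    assume "sat G nR (Ex x \<psi>)"
    then obtain b where b: "b \<in> verts G" "sat G (nR(x:=b)) \<psi>" by auto
    have gs2: "gsetup G k B A" using gsetup.swap[OF gs] .
    have inv2: "Inv G k B A (Suc m') nR nL (Vi - {x}) (Vab - {x}) (Vba - {x})" by (rule Inv_swap[OF inv])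
    obtain a Vi' Vab' Vba' where a: "a \<in> verts G" "Inv G k B A m' (nR(x:=b)) (nL(x:=a)) Vi' Vab' Vba'"
      "Vi' \<union> Vab' \<union> Vba' = insert x ((Vi - {x}) \<union> (Vab - {x}) \<union> (Vba - {x}))"
      using gsetup.step[OF gs2 inv2 xn b(1)] by blast
    have "sat G (nR(x:=b)) \<psi> = sat G (nL(x:=a)) \<psi>"
      by (rule Ex.IH[OF gs2 a(2) fvs[OF a(3)] q])
    then show "sat G nL (Ex x \<psi>)" using b(2) a(1) by auto
  qed
qed

lemma one_dir:
  assumes gs: "gsetup G k A B" and len: "length w = n" and wv: "set w \<subseteq> verts G"
    and wfar: "\<forall>i<n. \<forall>u\<in>A \<union> B. \<not> reach G (2^k - 1) (w ! i) u"
    and q: "qr \<phi> \<le> k - 1" and fvp: "fv \<phi> \<subseteq> {0..n}"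
    and sA: "sat (expand G A) (\<lambda>i. w ! i) (ex_in_new n \<phi>)"
  shows "sat (expand G B) (\<lambda>i. w ! i) (ex_in_new n \<phi>)"
proof -
  define \<nu> where "\<nu> = (\<lambda>i. w ! i)"
  have k1: "1 \<le> k" using gsetup.k1[OF gs] .
  have km: "k = Suc (k - 1)" using k1 by simp
  obtain a where a: "a \<in> verts G" "a \<in> A" "sat G (\<nu>(n:=a)) \<phi>"
    using sA unfolding sat_ex_in_new \<nu>_def by blast
  have ef0: "efg (Suc (k-1)) (LL G k A) \<nu> (LL G k B) \<nu> {}"
    using gsetup.ef[OF gs] km by metis
  have "reach G (2^(k-1) - 1) a a" using reach_refl[OF a(1)] .
  then have aN: "a \<in> nbhd G (2^(k-1) - 1) A" unfolding nbhd_iff using a(1,2) by blast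
  then have aL: "a \<in> verts (LL G k A)" by (simp add: LL_verts)
  obtain b where b: "b \<in> verts (LL G k B)" and E1: "efg (k-1) (LL G k A) (\<nu>(n:=a)) (LL G k B) (\<nu>(n:=b)) (insert n {})"
    using efg_forth[OF ef0 aL, of n] by blast
  have bN: "b \<in> nbhd G (2^(k-1) - 1) B" using b by (simp add: LL_verts)
  have bG: "b \<in> verts G" using bN unfolding nbhd_iff by simp
  have pat: "patom (LL G k A) (\<nu>(n:=a)) (LL G k B) (\<nu>(n:=b)) (insert n {})" using efg_patom[OF E1] .
  have "a \<in> colr (LL G k A) None" unfolding LL_colN using a(2) aN by blast
  then have "b \<in> colr (LL G k B) None" using pat unfolding patom_def by auto
  then have bB: "b \<in> B" unfolding LL_colN by blast
  define nL where "nL = \<nu>(n:=a)"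
  define nR where "nR = \<nu>(n:=b)"
  have fa: "muA {n} nL nR = \<nu>(n:=a)" unfolding muA_def nL_def nR_def by auto
  have fb: "muB {n} nL nR = \<nu>(n:=b)" unfolding muB_def nL_def nR_def by auto
  have pk: "(2::nat)^(k-1) \<le> 2^k - 1"
  proof -
    have "(2::nat)^k = 2 * 2^(k-1)" using km by (metis power_Suc)
    moreover have "(1::nat) \<le> 2^(k-1)" by simp
    ultimately show ?thesis by linarith
  qed
  have pk2: "(2::nat)^(k-1) - 1 \<le> 2^k - 1" using pk by linarith
  have ids: "idsOK G (A \<union> B) (k-1) nL nR (\<nu>(n:=a)) (\<nu>(n:=b)) {0..<n} ({n} \<union> {})"
    unfolding idsOK_def
  proof (rule ballI)
    fix i assume i: "i \<in> {0..<n}"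
    then have iN: "i \<noteq> n" "i < n" by auto
    have e1: "nL i = w ! i" "nR i = w ! i" unfolding nL_def nR_def \<nu>_def using iN by simp_all
    have s1: "nL i = nR i" using e1 by simp
    have s2: "nL i \<in> verts G" using e1 wv iN(2) len by auto
    have wf1: "\<forall>u\<in>A \<union> B. \<not> reach G (2^k - 1) (w ! i) u" using wfar iN(2) by blast
    have s3: "\<forall>u\<in>A \<union> B. \<not> reach G (2^(k-1) - 1) u (nL i)"
    proof (intro ballI notI)
      fix u assume u: "u \<in> A \<union> B" "reach G (2^(k-1) - 1) u (nL i)"
      have "reach G (2^(k-1) - 1) (w ! i) u" using gsetup.rsym[OF gs u(2)] e1 by simp
      then have "reach G (2^k - 1) (w ! i) u" by (rule reach_mono[OF _ pk2])
      then show False using wf1 u(1) by blast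
    qed
    have s4: "\<forall>j\<in>{n} \<union> {}. \<not> reach G (2^(k-1)) ((\<nu>(n:=a)) j) (nL i) \<and> \<not> reach G (2^(k-1)) ((\<nu>(n:=b)) j) (nL i)"
    proof
      fix j assume "j \<in> {n} \<union> {}"
      then have jn: "j = n" by simp
      have na: "\<not> reach G (2^(k-1)) a (w ! i)"
      proof
        assume "reach G (2^(k-1)) a (w ! i)"
        then have "reach G (2^(k-1)) (w ! i) a" by (rule gsetup.rsym[OF gs])
        then have "reach G (2^k - 1) (w ! i) a" by (rule reach_mono[OF _ pk])
        then show False using wf1 a(2) by blast
      qed
      have nb: "\<not> reach G (2^(k-1)) b (w ! i)"
      proof
        assume "reach G (2^(k-1)) b (w ! i)"
        then have "reach G (2^(k-1)) (w ! i) b" by (rule gsetup.rsym[OF gs])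
        then have "reach G (2^k - 1) (w ! i) b" by (rule reach_mono[OF _ pk])
        then show False using wf1 bB by blast
      qed
      show "\<not> reach G (2^(k-1)) ((\<nu>(n:=a)) j) (nL i) \<and> \<not> reach G (2^(k-1)) ((\<nu>(n:=b)) j) (nL i)"
        using na nb jn e1 by simp
    qed
    show "nL i = nR i \<and> nL i \<in> verts G \<and> (\<forall>u\<in>A \<union> B. \<not> reach G (2^(k-1) - 1) u (nL i)) \<and>
      (\<forall>j\<in>{n} \<union> {}. \<not> reach G (2^(k-1)) ((\<nu>(n:=a)) j) (nL i) \<and> \<not> reach G (2^(k-1)) ((\<nu>(n:=b)) j) (nL i))"
      by (intro conjI s1 s2 s3 s4)
  qed
  have dep: "depOK G k A B (k-1) (\<nu>(n:=a)) (\<nu>(n:=b)) ({n} \<union> {})"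
    unfolding depOK_def
  proof
    fix j assume "j \<in> {n} \<union> {}"
    then have jn: "j = n" by simp
    have "reach G 0 a a" "reach G 0 b b" using a(1) bG by simp_all
    then show "(\<exists>u\<in>A. reach G (2^(k-1) - 2^(k-1)) u ((\<nu>(n:=a)) j)) \<and> (\<exists>u\<in>B. reach G (2^(k-1) - 2^(k-1)) u ((\<nu>(n:=b)) j))"
      using jn a(2) bB by auto
  qed
  have inv: "Inv G k A B (k-1) nL nR {0..<n} {n} {}"
  proof (rule InvI)
    show "{0..<n} \<inter> {n} = {}" by auto
    show "{0..<n} \<inter> {} = {}" by simp
    show "{n} \<inter> {} = {}" by simp
    show "k - 1 < k" using k1 by simp
    show "idsOK G (A \<union> B) (k-1) nL nR (muA {n} nL nR) (muB {n} nL nR) {0..<n} ({n} \<union> {})"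
      unfolding fa fb by (rule ids)
    show "depOK G k A B (k-1) (muA {n} nL nR) (muB {n} nL nR) ({n} \<union> {})"
      unfolding fa fb by (rule dep)
    show "efg (k-1) (LL G k A) (muA {n} nL nR) (LL G k B) (muB {n} nL nR) ({n} \<union> {})"
      unfolding fa fb using E1 by simp
  qed
  have fv2: "fv \<phi> \<subseteq> {0..<n} \<union> {n} \<union> {}" using fvp by auto
  have "sat G nL \<phi> = sat G nR \<phi>" by (rule main[OF gs inv fv2 q])
  then have "sat G (\<nu>(n:=b)) \<phi>" using a(3) unfolding nL_def nR_def by simp
  then show ?thesis unfolding sat_ex_in_new \<nu>_def[symmetric] using bG bB by blast
qed

theorem theorem4p2:
  fixes G :: "('a, 'c::finite) cgraph" and k n :: nat and A B :: "'a set"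
    and w :: "'a list" and \<phi> :: "'c fm"
  assumes "wf_cgraph G" and "k \<ge> 1"
    and "A \<subseteq> verts G" and "B \<subseteq> verts G"
    and "setdist G A B > enat (2 ^ k)"
    and "tp k (induced (expand G A) (nbhd G (2 ^ (k - 1) - 1) A))
         = tp k (induced (expand G B) (nbhd G (2 ^ (k - 1) - 1) B))"
    and "length w = n" and "set w \<subseteq> verts G"
    and "setdist G (set w) (A \<union> B) \<ge> enat (2 ^ k)"
    and "qr \<phi> \<le> k - 1" and "fv \<phi> \<subseteq> {0..n}"
  shows "sat (expand G A) (\<lambda>i. w ! i) (ex_in_new n \<phi>)
     \<longleftrightarrow> sat (expand G B) (\<lambda>i. w ! i) (ex_in_new n \<phi>)"
proof -
  have finG: "finite (verts G)" using assms(1) unfolding wf_cgraph_def by blast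
  have fin: "\<And>S. finite (verts (LL G k S))"
  proof -
    fix S
    have "verts (LL G k S) \<subseteq> verts G" unfolding LL_verts nbhd_def by blast
    then show "finite (verts (LL G k S))" using finG finite_subset by blast
  qed
  have far: "\<forall>a\<in>A. \<forall>b\<in>B. \<not> reach G (2^k) a b"
  proof (intro ballI notI)
    fix a b assume ab: "a \<in> A" "b \<in> B" "reach G (2^k) a b"
    have "gdist G a b \<le> enat (2^k)" using ab(3) unfolding gdist_le .
    moreover have "setdist G A B \<le> gdist G a b"
      unfolding setdist_def by (rule INF_lower2[OF ab(1)]) (rule INF_lower[OF ab(2)])
    ultimately show False using assms(5) by simp
  qed
  have ef: "\<forall>m1 m2. efg k (LL G k A) m1 (LL G k B) m2 {}"
  proof (intro allI)
    fix m1 m2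
    show "efg k (LL G k A) m1 (LL G k B) m2 {}"
      by (rule tp_efg) (use assms(6) fin in \<open>simp_all add: LL_def\<close>)
  qed
  have gs: "gsetup G k A B"
    by (unfold_locales) (use assms(1-4) far ef in auto)
  have wfar: "\<forall>i<n. \<forall>u\<in>A \<union> B. \<not> reach G (2^k - 1) (w ! i) u"
  proof (intro allI impI ballI notI)
    fix i u assume iu: "i < n" "u \<in> A \<union> B" "reach G (2^k - 1) (w ! i) u"
    have "w ! i \<in> set w" using iu(1) assms(7) by simp
    have "gdist G (w ! i) u \<le> enat (2^k - 1)" using iu(3) unfolding gdist_le .
    moreover have "setdist G (set w) (A \<union> B) \<le> gdist G (w ! i) u"
      unfolding setdist_def by (rule INF_lower2[OF \<open>w ! i \<in> set w\<close>]) (rule INF_lower[OF iu(2)])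
    moreover have "enat (2^k - 1) < enat (2^k)" by simp
    ultimately show False using assms(9) by (meson leD order.trans)
  qed
  have wfar2: "\<forall>i<n. \<forall>u\<in>B \<union> A. \<not> reach G (2^k - 1) (w ! i) u" using wfar by (simp add: Un_commute)
  show ?thesis
  proof
    assume "sat (expand G A) (\<lambda>i. w ! i) (ex_in_new n \<phi>)"
    then show "sat (expand G B) (\<lambda>i. w ! i) (ex_in_new n \<phi>)"
      by (rule one_dir[OF gs assms(7,8) wfar assms(10,11)])
  next
    assume "sat (expand G B) (\<lambda>i. w ! i) (ex_in_new n \<phi>)"
    then show "sat (expand G A) (\<lambda>i. w ! i) (ex_in_new n \<phi>)"
      by (rule one_dir[OF gsetup.swap[OF gs] assms(7,8) wfar2 assms(10,11)])
  qed
qed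

end
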